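(* Let $\rho,\sigma$ be full-rank density operators on a finite-dimensional Hilbert space. For any $x\le\lambda_{\min}(\rho)$, $$\beta_{1-x}(\rho\|\sigma)=x\exp\bigl(-\widetilde D_{+\infty}(\rho\|\sigma)\bigr),\qquad 1-\beta_x(\rho\|\sigma)=x\exp\bigl(-\widetilde D_{-\infty}(\rho\|\sigma)\bigr),$$ $$\widehat\beta^{\mathrm R}_{1-x}(\rho\|\sigma)=x\exp\bigl(-D_{+\infty}(\rho\|\mathcal P_\rho(\sigma))\bigr),\qquad 1-\widehat\beta^{\mathrm R}_x(\rho\|\sigma)=x\exp\bigl(-D_{-\infty}(\rho\|\mathcal P_\rho(\sigma))\bigr).$$ Also, for any $x\le\lambda_{\min}(\mathcal P_\sigma(\rho))$, $$\widehat\beta^{\mathrm L}_{1-x}(\rho\|\sigma)=x\exp\bigl(-D_{+\infty}(\mathcal P_\sigma(\rho)\|\sigma)\bigr),\qquad 1-\widehat\beta^{\mathrm L}_x(\rho\|\sigma)=x\exp\bigl(-D_{-\infty}(\mathcal P_\sigma(\rho)\|\sigma)\bigr).$$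
   Context: $\beta_x(\rho\|\sigma)=\min\{\mathrm{Tr}(\sigma Q):0\le Q\le\mathbb1,\ \mathrm{Tr}(\rho Q)\ge1-x\}$. For $\tau=\sum_\lambda\lambda\Pi_\lambda$, $\mathcal P_\tau(X)=\sum_\lambda\Pi_\lambda X\Pi_\lambda$; $\widehat\beta^{\mathrm L}_x(\rho\|\sigma)=\beta_x(\mathcal P_\sigma(\rho)\|\sigma)$, $\widehat\beta^{\mathrm R}_x(\rho\|\sigma)=\beta_x(\rho\|\mathcal P_\rho(\sigma))$. $\widetilde D_{+\infty}(\rho\|\sigma)=\log\lambda_{\max}(\sigma^{-1/2}\rho\sigma^{-1/2})$ and $\widetilde D_{-\infty}(\rho\|\sigma)=-\log\lambda_{\max}(\rho^{-1/2}\sigma\rho^{-1/2})$ (the $\alpha\to\pm\infty$ limits of the minimal Rényi divergence); for commuting arguments these are written $D_{\pm\infty}$. $\exp$ and $\log$ share a base; $\lambda_{\min}$ is the smallest eigenvalue. *)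

theory Defs
  imports Complex_Main "Jordan_Normal_Form.Jordan_Normal_Form"
begin

definition ctrace :: "complex mat \<Rightarrow> complex" where
  "ctrace A = (\<Sum>i<dim_row A. A $$ (i, i))"

definition adj :: "complex mat \<Rightarrow> complex mat" where
  "adj A = mat (dim_col A) (dim_row A) (\<lambda>(i, j). cnj (A $$ (j, i)))"

definition hermitian :: "complex mat \<Rightarrow> bool" where
  "hermitian A \<longleftrightarrow> A \<in> carrier_mat (dim_row A) (dim_row A) \<and> adj A = A"

definition psd :: "complex mat \<Rightarrow> bool" where
  "psd A \<longleftrightarrow> hermitian A \<and>
     (\<forall>v \<in> carrier_vec (dim_row A). 0 \<le> Re (conjugate v \<bullet> (A *\<^sub>v v)))"

definition pd :: "complex mat \<Rightarrow> bool" where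
  "pd A \<longleftrightarrow> psd A \<and> det A \<noteq> 0"

definition density_op :: "nat \<Rightarrow> complex mat \<Rightarrow> bool" where
  "density_op n \<rho> \<longleftrightarrow> \<rho> \<in> carrier_mat n n \<and> psd \<rho> \<and> ctrace \<rho> = 1"

definition full_rank :: "complex mat \<Rightarrow> bool" where
  "full_rank A \<longleftrightarrow> det A \<noteq> 0"

definition rspec :: "complex mat \<Rightarrow> real set" where
  "rspec A = {r. eigenvalue A (complex_of_real r)}"

definition lambda_min :: "complex mat \<Rightarrow> real" where
  "lambda_min A = Min (rspec A)"

definition lambda_max :: "complex mat \<Rightarrow> real" where
  "lambda_max A = Max (rspec A)"

definition inv_sqrt :: "complex mat \<Rightarrow> complex mat" where
  "inv_sqrt A = (THE B. B \<in> carrier_mat (dim_row A) (dim_row A) \<and> pd B \<and>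
                        B * B * A = 1\<^sub>m (dim_row A))"

definition eig_proj :: "complex mat \<Rightarrow> real \<Rightarrow> complex mat" where
  "eig_proj \<tau> l = (THE P. P \<in> carrier_mat (dim_row \<tau>) (dim_row \<tau>) \<and> hermitian P \<and> P * P = P \<and>
      (\<forall>v \<in> carrier_vec (dim_row \<tau>). P *\<^sub>v v = v \<longleftrightarrow> \<tau> *\<^sub>v v = complex_of_real l \<cdot>\<^sub>v v))"

definition pinch :: "complex mat \<Rightarrow> complex mat \<Rightarrow> complex mat" where
  "pinch \<tau> X = mat (dim_row \<tau>) (dim_row \<tau>)
     (\<lambda>(i, j). \<Sum>l\<in>rspec \<tau>. (eig_proj \<tau> l * X * eig_proj \<tau> l) $$ (i, j))"

definition beta :: "real \<Rightarrow> complex mat \<Rightarrow> complex mat \<Rightarrow> real" where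
  "beta x \<rho> \<sigma> = Inf {Re (ctrace (\<sigma> * Q)) | Q.
      Q \<in> carrier_mat (dim_row \<rho>) (dim_row \<rho>) \<and> psd Q \<and> psd (1\<^sub>m (dim_row \<rho>) - Q) \<and>
      Re (ctrace (\<rho> * Q)) \<ge> 1 - x}"

definition beta_L :: "real \<Rightarrow> complex mat \<Rightarrow> complex mat \<Rightarrow> real" where
  "beta_L x \<rho> \<sigma> = beta x (pinch \<sigma> \<rho>) \<sigma>"

definition beta_R :: "real \<Rightarrow> complex mat \<Rightarrow> complex mat \<Rightarrow> real" where
  "beta_R x \<rho> \<sigma> = beta x \<rho> (pinch \<rho> \<sigma>)"

text \<open>Minimal Renyi divergences of order +infinity and -infinity (natural log).\<close>
definition D_pinf :: "complex mat \<Rightarrow> complex mat \<Rightarrow> real" where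
  "D_pinf \<rho> \<sigma> = ln (lambda_max (inv_sqrt \<sigma> * \<rho> * inv_sqrt \<sigma>))"

definition D_minf :: "complex mat \<Rightarrow> complex mat \<Rightarrow> real" where
  "D_minf \<rho> \<sigma> = - ln (lambda_max (inv_sqrt \<rho> * \<sigma> * inv_sqrt \<rho>))"

end

theory Submission
  imports Defs "Jordan_Normal_Form.Spectral_Radius"
begin

definition ip :: "complex vec \<Rightarrow> complex vec \<Rightarrow> complex" where
  "ip v w = (\<Sum>i<dim_vec w. cnj (v $ i) * w $ i)"

lemma adj_carrier[simp]: "adj A \<in> carrier_mat (dim_col A) (dim_row A)"
  "dim_row (adj A) = dim_col A" "dim_col (adj A) = dim_row A"
  by (auto simp: adj_def)

lemma adj_carrier_mat[simp]: "A \<in> carrier_mat n m \<Longrightarrow> adj A \<in> carrier_mat m n"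
  by (auto simp: adj_def)

lemma mult_mat_vec_zero[simp]: "A \<in> carrier_mat m n \<Longrightarrow> A *\<^sub>v 0\<^sub>v n = 0\<^sub>v m"
  by (rule eq_vecI) auto

lemma adj_index[simp]: "i < dim_col A \<Longrightarrow> j < dim_row A \<Longrightarrow> adj A $$ (i,j) = cnj (A $$ (j,i))"
  by (simp add: adj_def)

lemma adj_adj[simp]: "adj (adj A) = A"
  by (rule eq_matI) (auto simp: adj_def)

lemma adj_mult: "A \<in> carrier_mat n m \<Longrightarrow> B \<in> carrier_mat m k \<Longrightarrow> adj (A * B) = adj B * adj A"
  by (rule eq_matI) (auto simp: adj_def scalar_prod_def cnj_sum mult.commute intro!: sum.cong)

lemma adj_one[simp]: "adj (1\<^sub>m n) = 1\<^sub>m n"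
  by (rule eq_matI) (auto simp: adj_def)

lemma adj_zero[simp]: "adj (0\<^sub>m n m) = 0\<^sub>m m n"
  by (rule eq_matI) (auto simp: adj_def)

lemma adj_add: "A \<in> carrier_mat n m \<Longrightarrow> B \<in> carrier_mat n m \<Longrightarrow> adj (A + B) = adj A + adj B"
  by (rule eq_matI) (auto simp: adj_def)

lemma adj_minus: "A \<in> carrier_mat n m \<Longrightarrow> B \<in> carrier_mat n m \<Longrightarrow> adj (A - B) = adj A - adj B"
  by (rule eq_matI) (auto simp: adj_def)

lemma adj_smult: "adj (c \<cdot>\<^sub>m A) = cnj c \<cdot>\<^sub>m adj A"
  by (rule eq_matI) (auto simp: adj_def)

lemma ip_adj: assumes "A \<in> carrier_mat n m" "v \<in> carrier_vec n" "w \<in> carrier_vec m"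
  shows "ip v (A *\<^sub>v w) = ip (adj A *\<^sub>v v) w"
proof -
  have "ip v (A *\<^sub>v w) = (\<Sum>i<n. \<Sum>k<m. cnj (v $ i) * (A $$ (i,k) * w $ k))"
    using assms by (auto simp: ip_def scalar_prod_def sum_distrib_left lessThan_atLeast0 intro!: sum.cong)
  also have "\<dots> = (\<Sum>k<m. \<Sum>i<n. cnj (v $ i) * (A $$ (i,k) * w $ k))"
    by (rule sum.swap)
  also have "\<dots> = ip (adj A *\<^sub>v v) w"
    using assms by (auto simp: ip_def scalar_prod_def sum_distrib_right cnj_sum lessThan_atLeast0 intro!: sum.cong)
  finally show ?thesis .
qed

lemma ip_cnj: "dim_vec v = dim_vec w \<Longrightarrow> ip w v = cnj (ip v w)"
  by (auto simp: ip_def cnj_sum mult.commute)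

lemma ip_add2: "dim_vec w1 = dim_vec w2 \<Longrightarrow> ip v (w1 + w2) = ip v w1 + ip v w2"
  by (auto simp: ip_def distrib_left sum.distrib)

lemma ip_minus2: "dim_vec w1 = dim_vec w2 \<Longrightarrow> ip v (w1 - w2) = ip v w1 - ip v w2"
  by (auto simp: ip_def right_diff_distrib sum_subtractf)

lemma ip_smult2[simp]: "ip v (c \<cdot>\<^sub>v w) = c * ip v w"
  by (auto simp: ip_def sum_distrib_left ac_simps)

lemma ip_smult1[simp]: "dim_vec v = dim_vec w \<Longrightarrow> ip (c \<cdot>\<^sub>v v) w = cnj c * ip v w"
  by (auto simp: ip_def sum_distrib_left ac_simps)

lemma ip_zero1[simp]: "dim_vec w = n \<Longrightarrow> ip (0\<^sub>v n) w = 0" "ip w (0\<^sub>v n) = 0"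
  by (auto simp: ip_def)

lemma cnj_mult_self: "cnj z * z = complex_of_real ((cmod z)\<^sup>2)"
  by (metis complex_norm_square mult.commute)

lemma ip_self: "ip v v = complex_of_real (\<Sum>i<dim_vec v. (cmod (v $ i))\<^sup>2)"
  unfolding ip_def cnj_mult_self of_real_sum ..

lemma ip_self_Re: "Re (ip v v) = (\<Sum>i<dim_vec v. (cmod (v $ i))\<^sup>2)"
  by (simp add: ip_self)

lemma ip_self_real: "ip v v = complex_of_real (Re (ip v v))"
  by (simp add: ip_self)

lemma ip_self_ge0: "0 \<le> Re (ip v v)"
  by (simp add: ip_self_Re sum_nonneg)

lemma ip_self_0: "v \<in> carrier_vec n \<Longrightarrow> ip v v = 0 \<longleftrightarrow> v = 0\<^sub>v n"
proof
  assume v: "v \<in> carrier_vec n" and "ip v v = 0"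
  then have "complex_of_real (\<Sum>i<n. (cmod (v $ i))\<^sup>2) = 0" unfolding ip_self using v by simp
  then have "(\<Sum>i<n. (cmod (v $ i))\<^sup>2) = 0" by (simp only: of_real_eq_0_iff)
  then have "\<forall>i\<in>{..<n}. (cmod (v $ i))\<^sup>2 = 0"
    by (subst sum_nonneg_eq_0_iff[symmetric]) auto
  then show "v = 0\<^sub>v n" using v by (auto intro!: eq_vecI)
qed (auto simp: ip_def)

lemma ip_self_pos: "v \<in> carrier_vec n \<Longrightarrow> v \<noteq> 0\<^sub>v n \<Longrightarrow> 0 < Re (ip v v)"
  using ip_self_0[of v n] ip_self_ge0[of v] ip_self_real[of v]
  by (metis less_eq_real_def of_real_0)

lemma adj_mult_index: assumes "A \<in> carrier_mat n k" "B \<in> carrier_mat n k'" "i < k" "j < k'"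
  shows "(adj A * B) $$ (i,j) = ip (col A i) (col B j)"
  using assms by (auto simp: ip_def scalar_prod_def lessThan_atLeast0 intro!: sum.cong)

lemma adj_mult_vec_index: assumes "A \<in> carrier_mat n k" "x \<in> carrier_vec n" "j < k"
  shows "(adj A *\<^sub>v x) $ j = ip (col A j) x"
  using assms by (auto simp: ip_def scalar_prod_def lessThan_atLeast0 intro!: sum.cong)

definition orthonormal :: "nat \<Rightarrow> complex vec list \<Rightarrow> bool" where
  "orthonormal n ws \<longleftrightarrow> set ws \<subseteq> carrier_vec n \<and>
     (\<forall>i<length ws. \<forall>j<length ws. ip (ws!i) (ws!j) = (if i = j then 1 else 0))"

lemma orthonormal_col[simp]: "orthonormal n ws \<Longrightarrow> i < length ws \<Longrightarrow> col (mat_of_cols n ws) i = ws!i"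
  unfolding orthonormal_def by (intro col_mat_of_cols) auto

lemma orthonormal_adj_mult: assumes "orthonormal n ws"
  shows "adj (mat_of_cols n ws) * mat_of_cols n ws = 1\<^sub>m (length ws)"
proof (rule eq_matI)
  fix i j assume "i < dim_row (1\<^sub>m (length ws))" "j < dim_col (1\<^sub>m (length ws))"
  then show "(adj (mat_of_cols n ws) * mat_of_cols n ws) $$ (i, j) = 1\<^sub>m (length ws) $$ (i, j)"
  proof -
    have "(adj (mat_of_cols n ws) * mat_of_cols n ws) $$ (i, j) = ip (ws!i) (ws!j)"
      using adj_mult_index[of "mat_of_cols n ws" n "length ws" "mat_of_cols n ws" "length ws" i j]
        orthonormal_col[OF assms] \<open>i < _\<close> \<open>j < _\<close> by simp
    then show ?thesis using assms \<open>i < _\<close> \<open>j < _\<close> unfolding orthonormal_def by simp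
  qed
qed auto

lemma orthonormal_unitary: assumes "orthonormal n ws" "length ws = n"
  shows "adj (mat_of_cols n ws) * mat_of_cols n ws = 1\<^sub>m n"
    "mat_of_cols n ws * adj (mat_of_cols n ws) = 1\<^sub>m n"
proof -
  show 1: "adj (mat_of_cols n ws) * mat_of_cols n ws = 1\<^sub>m n"
    using orthonormal_adj_mult[OF assms(1)] assms(2) by simp
  show "mat_of_cols n ws * adj (mat_of_cols n ws) = 1\<^sub>m n"
    by (rule mat_mult_left_right_inverse[OF _ _ 1]) (use assms(2) in auto)
qed

lemma orthonormal_complete: assumes "orthonormal n ws" "length ws = n" "x \<in> carrier_vec n"
  "\<And>l. l < n \<Longrightarrow> ip (ws!l) x = 0"
  shows "x = 0\<^sub>v n"
proof -
  let ?W = "mat_of_cols n ws"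
  have W: "?W \<in> carrier_mat n n" using assms(2) by auto
  have z: "adj ?W *\<^sub>v x = 0\<^sub>v n"
  proof (rule eq_vecI)
    fix l assume "l < dim_vec (0\<^sub>v n)"
    then have l: "l < n" by simp
    have "col ?W l = ws!l" using orthonormal_col[OF assms(1)] assms(2) l by auto
    then show "(adj ?W *\<^sub>v x) $ l = 0\<^sub>v n $ l"
      using adj_mult_vec_index[OF W assms(3) l] assms(4)[OF l] l by simp
  qed (use assms(2) in simp)
  have "x = (?W * adj ?W) *\<^sub>v x" using orthonormal_unitary[OF assms(1,2)] assms(3) by simp
  also have "\<dots> = ?W *\<^sub>v (adj ?W *\<^sub>v x)" using W assms(3) by (intro assoc_mult_mat_vec[of _ n n _ n]) auto
  also have "\<dots> = 0\<^sub>v n" using z W by simp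
  finally show ?thesis .
qed

lemma ip_cscalar: "dim_vec a = dim_vec b \<Longrightarrow> ip a b = b \<bullet>c a"
  by (auto simp: ip_def scalar_prod_def lessThan_atLeast0 mult.commute intro!: sum.cong)

lemma norm_aux: assumes "0 < Re z" "z = complex_of_real (Re z)"
  shows "complex_of_real (1 / sqrt (Re z)) * complex_of_real (1 / sqrt (Re z)) * z = 1"
proof -
  have "complex_of_real (1 / sqrt (Re z)) * complex_of_real (1 / sqrt (Re z)) * z
     = complex_of_real (1 / sqrt (Re z) * (1 / sqrt (Re z)) * Re z)"
    by (subst (3) assms(2)) (simp only: of_real_mult)
  also have "1 / sqrt (Re z) * (1 / sqrt (Re z)) * Re z = 1" using assms(1) by (simp add: field_simps)
  finally show ?thesis by (simp only: of_real_1)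
qed

lemma orth_completion: assumes v: "v \<in> carrier_vec n" and v0: "v \<noteq> 0\<^sub>v n"
  shows "\<exists>ws. length ws = n \<and> orthonormal n ws \<and>
    ws!0 = complex_of_real (1 / sqrt (Re (ip v v))) \<cdot>\<^sub>v v"
proof -
  interpret cof_vec_space n "TYPE(complex)" .
  define b where "b = basis_completion v"
  from basis_completion[OF v v0, folded b_def]
  have b: "set b \<subseteq> carrier_vec n" "distinct b" "\<not> lin_dep (set b)" "length b = n" "hd b = v"
    by auto
  have n: "n > 0" using v v0 by (cases n) auto
  obtain vs where bv: "b = v # vs" using b(4,5) n by (cases b) auto
  define us where "us = gram_schmidt n b"
  from gram_schmidt_result[OF b(1) b(2) b(3) us_def]
  have us: "corthogonal us" "set us \<subseteq> carrier_vec n" "length us = n" using b(4) by auto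
  have hd: "hd us = v" unfolding us_def bv using v by simp
  define nz where "nz w = complex_of_real (1 / sqrt (Re (ip w w))) \<cdot>\<^sub>v w" for w
  define ws where "ws = map nz us"
  have us0: "us ! 0 = v" using hd us(3) n by (metis hd_conv_nth list.size(3) not_less0)
  have ip_us: "ip (us!i) (us!j) = (if i = j then complex_of_real (Re (ip (us!i) (us!i))) else 0)"
    and pos: "i = j \<Longrightarrow> Re (ip (us!i) (us!i)) > 0"
    if "i < n" "j < n" for i j
  proof -
    have c: "us!i \<in> carrier_vec n" "us!j \<in> carrier_vec n" using us that by auto
    have "ip (us!i) (us!j) = us!j \<bullet>c us!i" using c by (intro ip_cscalar) auto
    moreover have "us!j \<bullet>c us!i = 0 \<longleftrightarrow> j \<noteq> i" using corthogonalD[OF us(1), of j i] us(3) that by simp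
    ultimately show "ip (us!i) (us!j) = (if i = j then complex_of_real (Re (ip (us!i) (us!i))) else 0)"
      using ip_self_real by auto
    assume "i = j"
    then have "us!i \<noteq> 0\<^sub>v n" using \<open>us!j \<bullet>c us!i = 0 \<longleftrightarrow> j \<noteq> i\<close> c by auto
    then show "Re (ip (us!i) (us!i)) > 0" using ip_self_pos c by blast
  qed
  show ?thesis
  proof (intro exI conjI)
    show "length ws = n" using us by (simp add: ws_def)
    show "ws!0 = complex_of_real (1 / sqrt (Re (ip v v))) \<cdot>\<^sub>v v"
      using n us us0 by (simp add: ws_def nz_def)
    show "orthonormal n ws"
      unfolding orthonormal_def
    proof (intro conjI allI impI)
      show "set ws \<subseteq> carrier_vec n" using us by (auto simp: ws_def nz_def)
      fix i j assume i: "i < length ws" and j: "j < length ws"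
      then have i': "i < n" and j': "j < n" using us by (auto simp: ws_def)
      have c: "us!i \<in> carrier_vec n" "us!j \<in> carrier_vec n" using us i' j' by auto
      have "ip (ws!i) (ws!j) = complex_of_real (1 / sqrt (Re (ip (us!i) (us!i)))) *
          complex_of_real (1 / sqrt (Re (ip (us!j) (us!j)))) * ip (us!i) (us!j)"
        using i' j' c us by (simp add: ws_def nz_def)
      also have "\<dots> = (if i = j then 1 else 0)"
      proof (cases "i = j")
        case True
        have z: "ip (us!i) (us!i) = complex_of_real (Re (ip (us!i) (us!i)))" using ip_self_real by blast
        show ?thesis using norm_aux[OF pos[OF i' i'] z] by (simp only: True) simp
      next
        case False then show ?thesis using ip_us[OF i' j'] by simp
      qed
      finally show "ip (ws!i) (ws!j) = (if i = j then 1 else 0)" .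
    qed
  qed
qed

lemma hermitian_ip: "A \<in> carrier_mat n n \<Longrightarrow> adj A = A \<Longrightarrow> v \<in> carrier_vec n \<Longrightarrow> w \<in> carrier_vec n
  \<Longrightarrow> ip v (A *\<^sub>v w) = ip (A *\<^sub>v v) w"
  using ip_adj[of A n n v w] by simp

lemma orthonormal_eq: assumes "orthonormal n ws" "length ws = n" "x \<in> carrier_vec n" "x' \<in> carrier_vec n"
  "\<And>l. l < n \<Longrightarrow> ip (ws!l) x = ip (ws!l) x'"
  shows "x = x'"
proof -
  let ?W = "mat_of_cols n ws"
  have W: "?W \<in> carrier_mat n n" using assms(2) by auto
  have z: "adj ?W *\<^sub>v x = adj ?W *\<^sub>v x'"
  proof (rule eq_vecI)
    fix l assume "l < dim_vec (adj ?W *\<^sub>v x')"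
    then have l: "l < n" using assms(2) by simp
    have "col ?W l = ws!l" using orthonormal_col[OF assms(1)] assms(2) l by auto
    then show "(adj ?W *\<^sub>v x) $ l = (adj ?W *\<^sub>v x') $ l"
      using adj_mult_vec_index[OF W assms(3) l] adj_mult_vec_index[OF W assms(4) l] assms(5)[OF l] by simp
  qed (use W in simp)
  have "x = (?W * adj ?W) *\<^sub>v x" using orthonormal_unitary[OF assms(1,2)] assms(3) by simp
  also have "\<dots> = ?W *\<^sub>v (adj ?W *\<^sub>v x)" using W assms(3) by (intro assoc_mult_mat_vec[of _ n n _ n]) auto
  also have "\<dots> = ?W *\<^sub>v (adj ?W *\<^sub>v x')" using z by simp
  also have "\<dots> = (?W * adj ?W) *\<^sub>v x'" using W assms(4) by (intro assoc_mult_mat_vec[of _ n n _ n, symmetric]) auto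
  also have "\<dots> = x'" using orthonormal_unitary[OF assms(1,2)] assms(4) by simp
  finally show ?thesis .
qed

lemma real_of_cnj: assumes "cnj e = e" shows "e = complex_of_real (Re e)"
proof -
  have "Im e = 0" using arg_cong[OF assms, of Im] by simp
  then show ?thesis by (simp add: complex_eq_iff)
qed

lemma spectral_vec:
  assumes "A \<in> carrier_mat n n" "adj A = A"
  shows "\<exists>us ds. length us = n \<and> length ds = n \<and> orthonormal n us \<and>
     (\<forall>i<n. A *\<^sub>v (us!i) = complex_of_real (ds!i) \<cdot>\<^sub>v (us!i))"
  using assms
proof (induction n arbitrary: A)
  case 0
  then show ?case by (intro exI[of _ "[]"]) (auto simp: orthonormal_def)
next
  case (Suc m)
  let ?n = "Suc m"
  have A: "A \<in> carrier_mat ?n ?n" and hA: "adj A = A" by fact+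
  from spectrum_non_empty[OF A] obtain e where "eigenvalue A e" by (auto simp: spectrum_def)
  then obtain v where ev: "eigenvector A v e" by (auto simp: eigenvalue_def)
  then have v: "v \<in> carrier_vec ?n" "v \<noteq> 0\<^sub>v ?n" "A *\<^sub>v v = e \<cdot>\<^sub>v v" using A by (auto simp: eigenvector_def)
  have "ip v (A *\<^sub>v v) = e * ip v v" using v by simp
  moreover have "ip v (A *\<^sub>v v) = cnj e * ip v v" using hermitian_ip[OF A hA v(1) v(1)] v by simp
  moreover have "ip v v \<noteq> 0" using ip_self_0 v by blast
  ultimately have "cnj e = e" by simp
  then have e: "e = complex_of_real (Re e)" by (rule real_of_cnj)
  obtain ws where ws: "length ws = ?n" "orthonormal ?n ws"
    "ws!0 = complex_of_real (1/sqrt(Re(ip v v))) \<cdot>\<^sub>v v" using orth_completion[OF v(1,2)] by blast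
  define c where "c = complex_of_real (1/sqrt(Re(ip v v)))"
  have w0: "ws!0 \<in> carrier_vec ?n" using ws v by simp
  have Aw0: "A *\<^sub>v (ws!0) = e \<cdot>\<^sub>v (ws!0)"
  proof -
    have "A *\<^sub>v (ws!0) = c \<cdot>\<^sub>v (A *\<^sub>v v)" using ws(3) mult_mat_vec[OF A v(1)] by (simp add: c_def)
    also have "\<dots> = e \<cdot>\<^sub>v (ws!0)" using v(3) ws(3) by (simp add: smult_smult_assoc c_def mult.commute)
    finally show ?thesis .
  qed
  define V where "V = mat_of_cols ?n (tl ws)"
  have V: "V \<in> carrier_mat ?n m" using mat_of_cols_carrier(1)[of ?n "tl ws"] ws(1) by (simp add: V_def)
  have on_tl: "orthonormal ?n (tl ws)" unfolding orthonormal_def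
  proof (intro conjI allI impI)
    show "set (tl ws) \<subseteq> carrier_vec ?n" using ws(2) unfolding orthonormal_def by (cases ws) auto
    fix i j assume "i < length (tl ws)" "j < length (tl ws)"
    then show "ip (tl ws ! i) (tl ws ! j) = (if i = j then 1 else 0)"
      using ws(2) unfolding orthonormal_def by (simp add: nth_tl)
  qed
  have VV: "adj V * V = 1\<^sub>m m" using orthonormal_adj_mult[OF on_tl] ws by (simp add: V_def)
  have colV: "col V k = ws ! Suc k" if "k < m" for k
    using orthonormal_col[OF on_tl] that ws by (simp add: V_def nth_tl)
  have ipV: "ip (ws ! Suc k) x = (adj V *\<^sub>v x) $ k" if "k < m" "x \<in> carrier_vec ?n" for k x
    using adj_mult_vec_index[OF V that(2) that(1)] colV[OF that(1)] by simp
  have Vw0: "adj V *\<^sub>v (ws!0) = 0\<^sub>v m"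
  proof (rule eq_vecI)
    fix j assume "j < dim_vec (0\<^sub>v m)"
    then have j: "j < m" by simp
    have "(adj V *\<^sub>v (ws!0)) $ j = ip (ws ! Suc j) (ws!0)" using ipV[OF j w0] by simp
    also have "\<dots> = 0" using ws(1,2) j unfolding orthonormal_def by auto
    finally show "(adj V *\<^sub>v (ws!0)) $ j = 0\<^sub>v m $ j" using j by simp
  qed (use V in simp)
  define B where "B = adj V * A * V"
  have aV: "adj V \<in> carrier_mat m ?n" using V by simp
  have B: "B \<in> carrier_mat m m" unfolding B_def by (rule mult_carrier_mat[OF mult_carrier_mat[OF aV A] V])
  have hB: "adj B = B"
  proof -
    have "adj B = adj V * adj (adj V * A)" unfolding B_def
      by (rule adj_mult[of _ m ?n _ m]) (use V A in auto)
    also have "adj (adj V * A) = adj A * V" by (subst adj_mult[of _ m ?n _ ?n]) (use V A in auto)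
    also have "adj V * (adj A * V) = B" unfolding B_def hA using V A by (simp add: assoc_mult_mat[of _ m ?n _ ?n _ m])
    finally show ?thesis .
  qed
  have Bv: "B *\<^sub>v y = adj V *\<^sub>v (A *\<^sub>v (V *\<^sub>v y))" if "y \<in> carrier_vec m" for y
  proof -
    have "B *\<^sub>v y = (adj V * A) *\<^sub>v (V *\<^sub>v y)" unfolding B_def
      by (rule assoc_mult_mat_vec[of _ m ?n _ m]) (use V A that in auto)
    also have "\<dots> = adj V *\<^sub>v (A *\<^sub>v (V *\<^sub>v y))"
      by (rule assoc_mult_mat_vec[of _ m ?n _ ?n]) (use V A that in auto)
    finally show ?thesis .
  qed
  have VVy: "adj V *\<^sub>v (V *\<^sub>v y) = y" if "y \<in> carrier_vec m" for y
  proof -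
    have "adj V *\<^sub>v (V *\<^sub>v y) = (adj V * V) *\<^sub>v y"
      by (rule assoc_mult_mat_vec[of _ m ?n _ m, symmetric]) (use V that in auto)
    then show ?thesis using VV that by simp
  qed
  from Suc.IH[OF B hB] obtain us' ds' where IH: "length us' = m" "length ds' = m" "orthonormal m us'"
    "\<And>i. i < m \<Longrightarrow> B *\<^sub>v (us'!i) = complex_of_real (ds'!i) \<cdot>\<^sub>v (us'!i)" by blast
  have us'c: "us'!i \<in> carrier_vec m" if "i < m" for i using IH(1,3) that unfolding orthonormal_def by auto
  have ip0V: "ip (ws!0) (V *\<^sub>v y) = 0" if "y \<in> carrier_vec m" for y
    using ip_adj[OF V w0 that] Vw0 that by simp
  define us where "us = ws!0 # map (\<lambda>y. V *\<^sub>v y) us'"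
  define ds where "ds = Re e # ds'"
  have usc: "us!i \<in> carrier_vec ?n" if "i < ?n" for i
    using that w0 us'c V IH(1) by (cases i) (auto simp: us_def)
  show ?case
  proof (intro exI conjI allI impI)
    show "length us = ?n" "length ds = ?n" using IH by (auto simp: us_def ds_def)
    show "orthonormal ?n us" unfolding orthonormal_def
    proof (intro conjI allI impI)
      show "set us \<subseteq> carrier_vec ?n" using usc \<open>length us = ?n\<close> by (auto simp: set_conv_nth)
      fix i j assume i: "i < length us" and j: "j < length us"
      then have i': "i < ?n" and j': "j < ?n" using \<open>length us = ?n\<close> by auto
      show "ip (us!i) (us!j) = (if i = j then 1 else 0)"
      proof (cases i)
        case 0
        show ?thesis
        proof (cases j)
          case 0 then show ?thesis using \<open>i = 0\<close> ws(1,2) unfolding orthonormal_def by (auto simp: us_def)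
        next
          case (Suc j')
          then have "j' < m" using j' by simp
          then show ?thesis using \<open>i = 0\<close> Suc ip0V[OF us'c] IH(1) by (simp add: us_def)
        qed
      next
        case (Suc i')
        then have i'': "i' < m" using i' by simp
        show ?thesis
        proof (cases j)
          case 0
          have "ip (V *\<^sub>v (us'!i')) (ws!0) = cnj (ip (ws!0) (V *\<^sub>v (us'!i')))"
            by (rule ip_cnj) (use V us'c[OF i''] w0 in auto)
          then show ?thesis using Suc 0 ip0V[OF us'c[OF i'']] IH(1) i'' by (simp add: us_def)
        next
          case (Suc j')
          then have j'': "j' < m" using j' by simp
          have "ip (V *\<^sub>v (us'!i')) (V *\<^sub>v (us'!j')) = ip (adj V *\<^sub>v (V *\<^sub>v (us'!i'))) (us'!j')"
            by (rule ip_adj[OF V]) (use V us'c i'' j'' in auto)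
          also have "\<dots> = ip (us'!i') (us'!j')" using VVy[OF us'c[OF i'']] by simp
          also have "\<dots> = (if i' = j' then 1 else 0)" using IH(1,3) i'' j'' unfolding orthonormal_def by auto
          finally show ?thesis using \<open>i = Suc i'\<close> Suc IH(1) i'' j'' by (simp add: us_def)
        qed
      qed
    qed
    fix i assume i: "i < ?n"
    show "A *\<^sub>v (us!i) = complex_of_real (ds!i) \<cdot>\<^sub>v (us!i)"
    proof (cases i)
      case 0
      then show ?thesis using Aw0 e by (simp add: us_def ds_def)
    next
      case (Suc k)
      then have k: "k < m" using i by simp
      define y where "y = us'!k"
      define d where "d = complex_of_real (ds'!k)"
      have y: "y \<in> carrier_vec m" using us'c[OF k] by (simp add: y_def)
      have By: "B *\<^sub>v y = d \<cdot>\<^sub>v y" using IH(4)[OF k] by (simp add: y_def d_def)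
      have Vy: "V *\<^sub>v y \<in> carrier_vec ?n" using V y by simp
      have "A *\<^sub>v (V *\<^sub>v y) = d \<cdot>\<^sub>v (V *\<^sub>v y)"
      proof (rule orthonormal_eq[OF ws(2) ws(1)])
        show "A *\<^sub>v (V *\<^sub>v y) \<in> carrier_vec ?n" using A Vy by simp
        show "d \<cdot>\<^sub>v (V *\<^sub>v y) \<in> carrier_vec ?n" using Vy by simp
        fix l assume l: "l < ?n"
        show "ip (ws!l) (A *\<^sub>v (V *\<^sub>v y)) = ip (ws!l) (d \<cdot>\<^sub>v (V *\<^sub>v y))"
        proof (cases l)
          case 0
          have "ip (ws!0) (A *\<^sub>v (V *\<^sub>v y)) = ip (A *\<^sub>v (ws!0)) (V *\<^sub>v y)"
            by (rule hermitian_ip[OF A hA w0 Vy])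
          also have "\<dots> = cnj e * ip (ws!0) (V *\<^sub>v y)" unfolding Aw0 by (rule ip_smult1) (use w0 V in auto)
          also have "\<dots> = 0" using ip0V[OF y] by simp
          finally show ?thesis using 0 ip0V[OF y] by simp
        next
          case (Suc j)
          then have j: "j < m" using l by simp
          have "ip (ws!l) (A *\<^sub>v (V *\<^sub>v y)) = (adj V *\<^sub>v (A *\<^sub>v (V *\<^sub>v y))) $ j"
            using ipV[OF j] A Vy Suc by simp
          also have "\<dots> = (B *\<^sub>v y) $ j" using Bv[OF y] by simp
          also have "\<dots> = d * y $ j" using By j y by simp
          also have "\<dots> = d * (adj V *\<^sub>v (V *\<^sub>v y)) $ j" using VVy[OF y] by simp
          also have "\<dots> = ip (ws!l) (d \<cdot>\<^sub>v (V *\<^sub>v y))" using ipV[OF j Vy] Suc by simp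
          finally show ?thesis .
        qed
      qed
      then show ?thesis using Suc IH(1) k by (simp add: us_def ds_def y_def d_def)
    qed
  qed
qed

definition dmat :: "nat \<Rightarrow> (nat \<Rightarrow> real) \<Rightarrow> complex mat" where
  "dmat n f = mat n n (\<lambda>(i,j). if i = j then complex_of_real (f i) else 0)"

definition qf :: "complex mat \<Rightarrow> complex vec \<Rightarrow> complex" where
  "qf A v = ip v (A *\<^sub>v v)"

definition unitary :: "nat \<Rightarrow> complex mat \<Rightarrow> bool" where
  "unitary n U \<longleftrightarrow> U \<in> carrier_mat n n \<and> adj U * U = 1\<^sub>m n \<and> U * adj U = 1\<^sub>m n"

lemma adj_mult_vec_carrier[simp]: "A \<in> carrier_mat n m \<Longrightarrow> v \<in> carrier_vec n \<Longrightarrow> adj A *\<^sub>v v \<in> carrier_vec m"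
  by (metis adj_carrier_mat mult_mat_vec_carrier)

lemma sum_if_mult1: "(i::nat) < n \<Longrightarrow> (\<Sum>k\<in>{0..<n}. (if i = k then a else 0) * g k) = (a::complex) * g i"
proof -
  assume i: "i < n"
  have "(\<Sum>k\<in>{0..<n}. (if i = k then a else 0) * g k) = (\<Sum>k\<in>{0..<n}. if i = k then a * g k else 0)"
    by (rule sum.cong) auto
  also have "\<dots> = a * g i" using i by (simp add: sum.delta')
  finally show ?thesis .
qed

lemma sum_if_mult2: "(j::nat) < n \<Longrightarrow> (\<Sum>k\<in>{0..<n}. g k * (if k = j then a else 0)) = g j * (a::complex)"
proof -
  assume j: "j < n"
  have "(\<Sum>k\<in>{0..<n}. g k * (if k = j then a else 0)) = (\<Sum>k\<in>{0..<n}. if j = k then g k * a else 0)"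
    by (rule sum.cong) auto
  also have "\<dots> = g j * a" using j by (simp add: sum.delta')
  finally show ?thesis .
qed

lemma dmat_carrier[simp]: "dmat n f \<in> carrier_mat n n" "dim_row (dmat n f) = n" "dim_col (dmat n f) = n"
  by (auto simp: dmat_def)

lemma dmat_index[simp]: "i < n \<Longrightarrow> j < n \<Longrightarrow> dmat n f $$ (i,j) = (if i = j then complex_of_real (f i) else 0)"
  by (simp add: dmat_def)

lemma adj_dmat[simp]: "adj (dmat n f) = dmat n f"
  by (rule eq_matI) (auto simp: adj_def dmat_def)

lemma dmat_mult_vec: "c \<in> carrier_vec n \<Longrightarrow> dmat n f *\<^sub>v c = vec n (\<lambda>i. complex_of_real (f i) * c $ i)"
proof (rule eq_vecI)
  fix i assume c: "c \<in> carrier_vec n" and "i < dim_vec (vec n (\<lambda>i. complex_of_real (f i) * c $ i))"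
  then have i: "i < n" by simp
  have "(dmat n f *\<^sub>v c) $ i = (\<Sum>k\<in>{0..<n}. (if i = k then complex_of_real (f i) else 0) * c $ k)"
    using i c by (auto simp: scalar_prod_def intro!: sum.cong)
  also have "\<dots> = complex_of_real (f i) * c $ i" using i by (rule sum_if_mult1)
  finally show "(dmat n f *\<^sub>v c) $ i = vec n (\<lambda>i. complex_of_real (f i) * c $ i) $ i" using i by simp
qed auto

lemma dmat_mult_vec_carrier[simp]: "c \<in> carrier_vec n \<Longrightarrow> dmat n f *\<^sub>v c \<in> carrier_vec n"
  by (simp add: dmat_mult_vec)

lemma dmat_mult: "dmat n f * dmat n g = dmat n (\<lambda>i. f i * g i)"
proof (rule eq_matI)
  fix i j assume "i < dim_row (dmat n (\<lambda>i. f i * g i))" "j < dim_col (dmat n (\<lambda>i. f i * g i))"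
  then have i: "i < n" and j: "j < n" by auto
  have "(dmat n f * dmat n g) $$ (i,j) = (\<Sum>k\<in>{0..<n}. (if i = k then complex_of_real (f i) else 0) * (if k = j then complex_of_real (g k) else 0))"
    using i j by (auto simp: scalar_prod_def intro!: sum.cong)
  also have "\<dots> = complex_of_real (f i) * (if i = j then complex_of_real (g i) else 0)"
    using i by (rule sum_if_mult1)
  also have "\<dots> = (if i = j then complex_of_real (f i * g i) else 0)" by simp
  finally show "(dmat n f * dmat n g) $$ (i,j) = dmat n (\<lambda>i. f i * g i) $$ (i,j)" using i j by simp
qed auto

lemma dmat_one: "dmat n (\<lambda>_. 1) = 1\<^sub>m n"
  by (rule eq_matI) auto

lemma dmat_zero: "dmat n (\<lambda>_. 0) = 0\<^sub>m n n"
  by (rule eq_matI) auto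

lemma unitaryD: "unitary n U \<Longrightarrow> U \<in> carrier_mat n n" "unitary n U \<Longrightarrow> adj U * U = 1\<^sub>m n"
  "unitary n U \<Longrightarrow> U * adj U = 1\<^sub>m n"
  by (auto simp: unitary_def)

lemma unitary_adj_mult_vec: assumes "unitary n U" "x \<in> carrier_vec n"
  shows "U *\<^sub>v (adj U *\<^sub>v x) = x" "adj U *\<^sub>v (U *\<^sub>v x) = x"
proof -
  have U: "U \<in> carrier_mat n n" using assms unitaryD by auto
  have "U *\<^sub>v (adj U *\<^sub>v x) = (U * adj U) *\<^sub>v x"
    by (rule assoc_mult_mat_vec[symmetric, of _ n n _ n]) (use U assms in auto)
  then show "U *\<^sub>v (adj U *\<^sub>v x) = x" using unitaryD(3)[OF assms(1)] assms by simp
  have "adj U *\<^sub>v (U *\<^sub>v x) = (adj U * U) *\<^sub>v x"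
    by (rule assoc_mult_mat_vec[symmetric, of _ n n _ n]) (use U assms in auto)
  then show "adj U *\<^sub>v (U *\<^sub>v x) = x" using unitaryD(2)[OF assms(1)] assms by simp
qed

lemma unitary_ip: assumes "unitary n U" "c \<in> carrier_vec n" "c' \<in> carrier_vec n"
  shows "ip (U *\<^sub>v c) (U *\<^sub>v c') = ip c c'"
proof -
  have U: "U \<in> carrier_mat n n" using assms unitaryD by auto
  have "ip (U *\<^sub>v c) (U *\<^sub>v c') = ip (adj U *\<^sub>v (U *\<^sub>v c)) c'"
    by (rule ip_adj[OF U]) (use U assms in auto)
  then show ?thesis using unitary_adj_mult_vec(2)[OF assms(1,2)] by simp
qed

lemma unitary_ip_adj: assumes "unitary n U" "x \<in> carrier_vec n" "x' \<in> carrier_vec n"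
  shows "ip x x' = ip (adj U *\<^sub>v x) (adj U *\<^sub>v x')"
proof -
  have U: "U \<in> carrier_mat n n" using assms unitaryD by auto
  have "ip (U *\<^sub>v (adj U *\<^sub>v x)) (U *\<^sub>v (adj U *\<^sub>v x')) = ip (adj U *\<^sub>v x) (adj U *\<^sub>v x')"
    by (rule unitary_ip[OF assms(1)]) (use U assms in auto)
  then show ?thesis using unitary_adj_mult_vec(1)[OF assms(1)] assms(2,3) by simp
qed

lemma udu_mult_vec: assumes "unitary n U" "x \<in> carrier_vec n"
  shows "(U * dmat n f * adj U) *\<^sub>v x = U *\<^sub>v (dmat n f *\<^sub>v (adj U *\<^sub>v x))"
proof -
  have U: "U \<in> carrier_mat n n" using assms unitaryD by auto
  have "(U * dmat n f * adj U) *\<^sub>v x = (U * dmat n f) *\<^sub>v (adj U *\<^sub>v x)"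
    by (rule assoc_mult_mat_vec[of _ n n _ n]) (use U assms in auto)
  also have "\<dots> = U *\<^sub>v (dmat n f *\<^sub>v (adj U *\<^sub>v x))"
    by (rule assoc_mult_mat_vec[of _ n n _ n]) (use U assms in auto)
  finally show ?thesis .
qed

lemma udu_carrier[simp]: "unitary n U \<Longrightarrow> U * dmat n f * adj U \<in> carrier_mat n n"
  using unitaryD(1) by (metis adj_carrier_mat dmat_carrier(1) mult_carrier_mat)

lemma qf_udu: assumes "unitary n U" "x \<in> carrier_vec n"
  shows "qf (U * dmat n f * adj U) x = complex_of_real (\<Sum>i<n. f i * (cmod ((adj U *\<^sub>v x) $ i))\<^sup>2)"
proof -
  have U: "U \<in> carrier_mat n n" using assms unitaryD by auto
  define c where "c = adj U *\<^sub>v x"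
  have c: "c \<in> carrier_vec n" using U assms by (simp add: c_def)
  have "qf (U * dmat n f * adj U) x = ip (U *\<^sub>v c) (U *\<^sub>v (dmat n f *\<^sub>v c))"
    unfolding qf_def udu_mult_vec[OF assms] c_def unitary_adj_mult_vec(1)[OF assms] ..
  also have "\<dots> = ip c (dmat n f *\<^sub>v c)" by (rule unitary_ip[OF assms(1) c]) (use c in simp)
  also have "\<dots> = (\<Sum>i<n. cnj (c $ i) * (complex_of_real (f i) * c $ i))"
    using c by (simp add: ip_def dmat_mult_vec)
  also have "\<dots> = (\<Sum>i<n. complex_of_real (f i * (cmod (c $ i))\<^sup>2))"
  proof (rule sum.cong)
    fix i
    have "cnj (c $ i) * (complex_of_real (f i) * c $ i) = complex_of_real (f i) * (cnj (c $ i) * c $ i)"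
      by (simp only: ac_simps)
    then show "cnj (c $ i) * (complex_of_real (f i) * c $ i) = complex_of_real (f i * (cmod (c $ i))\<^sup>2)"
      by (simp only: cnj_mult_self of_real_mult)
  qed simp
  finally show ?thesis by (simp add: c_def)
qed

lemma ip_self_unitary: assumes "unitary n U" "x \<in> carrier_vec n"
  shows "Re (ip x x) = (\<Sum>i<n. (cmod ((adj U *\<^sub>v x) $ i))\<^sup>2)"
proof -
  have U: "U \<in> carrier_mat n n" using assms unitaryD by auto
  have "ip x x = ip (adj U *\<^sub>v x) (adj U *\<^sub>v x)" by (rule unitary_ip_adj[OF assms(1,2,2)])
  then show ?thesis using U assms by (simp add: ip_self_Re)
qed

lemma spectral_mat: assumes A: "A \<in> carrier_mat n n" and h: "adj A = A"
  shows "\<exists>U f. unitary n U \<and> A = U * dmat n f * adj U"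
proof -
  obtain us ds where us: "length us = n" "length ds = n" "orthonormal n us"
    "\<And>i. i < n \<Longrightarrow> A *\<^sub>v (us!i) = complex_of_real (ds!i) \<cdot>\<^sub>v (us!i)"
    using spectral_vec[OF A h] by blast
  define U where "U = mat_of_cols n us"
  define f where "f i = ds ! i" for i
  have U: "U \<in> carrier_mat n n" using mat_of_cols_carrier(1)[of n us] us by (simp add: U_def)
  have un: "unitary n U" unfolding unitary_def using orthonormal_unitary[OF us(3,1)] U by (simp add: U_def)
  have colU: "col U j = us ! j" if "j < n" for j using orthonormal_col[OF us(3)] that us by (simp add: U_def)
  have AU: "A * U = U * dmat n f"
  proof (rule eq_matI)
    fix i j assume "i < dim_row (U * dmat n f)" "j < dim_col (U * dmat n f)"
    then have i: "i < n" and j: "j < n" using U by auto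
    have "(A * U) $$ (i,j) = (A *\<^sub>v col U j) $ i" using i j A U by simp
    also have "\<dots> = complex_of_real (f j) * U $$ (i,j)"
    proof -
      have uj: "us!j \<in> carrier_vec n" using us(1,3) j unfolding orthonormal_def by auto
      have "U $$ (i,j) = us!j $ i" using colU[OF j] i j U by (metis carrier_matD index_col)
      then show ?thesis using us(4)[OF j] colU[OF j] uj i by (simp add: f_def)
    qed
    also have "\<dots> = (\<Sum>k\<in>{0..<n}. U $$ (i,k) * (if k = j then complex_of_real (f j) else 0))"
      using j by (subst sum_if_mult2) (auto simp: mult.commute)
    also have "\<dots> = (\<Sum>k\<in>{0..<n}. U $$ (i,k) * (if k = j then complex_of_real (f k) else 0))"
      by (rule sum.cong) auto
    also have "\<dots> = (U * dmat n f) $$ (i,j)" using i j U by (auto simp: scalar_prod_def intro!: sum.cong)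
    finally show "(A * U) $$ (i,j) = (U * dmat n f) $$ (i,j)" .
  qed (use A U in auto)
  have "A = A * (U * adj U)" using unitaryD(3)[OF un] A by simp
  also have "\<dots> = (A * U) * adj U" using A U by (simp add: assoc_mult_mat[of _ n n _ n _ n])
  also have "\<dots> = U * dmat n f * adj U" using AU by simp
  finally show ?thesis using un by blast
qed

lemma udu_col: assumes "unitary n U" "i < n"
  shows "(U * dmat n f * adj U) *\<^sub>v col U i = complex_of_real (f i) \<cdot>\<^sub>v col U i"
proof -
  have U: "U \<in> carrier_mat n n" using assms unitaryD by auto
  have "adj U *\<^sub>v col U i = col (adj U * U) i" using U assms by (intro col_mult2[symmetric]) auto
  also have "\<dots> = unit_vec n i" using unitaryD(2)[OF assms(1)] assms by simp
  finally have c: "adj U *\<^sub>v col U i = unit_vec n i" .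
  have d: "dmat n f *\<^sub>v unit_vec n i = complex_of_real (f i) \<cdot>\<^sub>v unit_vec n i"
    using assms(2) by (auto simp: dmat_mult_vec intro!: eq_vecI)
  have Ue: "U *\<^sub>v unit_vec n i = col U i" using U assms(2) by (intro eq_vecI) auto
  have "(U * dmat n f * adj U) *\<^sub>v col U i = U *\<^sub>v (dmat n f *\<^sub>v (adj U *\<^sub>v col U i))"
    by (rule udu_mult_vec[OF assms(1)]) (use U in auto)
  also have "\<dots> = U *\<^sub>v (complex_of_real (f i) \<cdot>\<^sub>v unit_vec n i)" unfolding c d ..
  also have "\<dots> = complex_of_real (f i) \<cdot>\<^sub>v (U *\<^sub>v unit_vec n i)" by (rule mult_mat_vec[OF U]) simp
  finally show ?thesis unfolding Ue .
qed

lemma unitary_col_norm: assumes "unitary n U" "i < n" shows "ip (col U i) (col U i) = 1"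
proof -
  have U: "U \<in> carrier_mat n n" using assms unitaryD by auto
  have "ip (col U i) (col U i) = (adj U * U) $$ (i,i)" using adj_mult_index[OF U U assms(2,2)] by simp
  then show ?thesis using unitaryD(2)[OF assms(1)] assms by simp
qed

lemma rspec_udu: assumes "unitary n U"
  shows "rspec (U * dmat n f * adj U) = f ` {..<n}"
proof
  have U: "U \<in> carrier_mat n n" using assms unitaryD by auto
  show "f ` {..<n} \<subseteq> rspec (U * dmat n f * adj U)"
  proof
    fix r assume "r \<in> f ` {..<n}"
    then obtain i where i: "i < n" "r = f i" by auto
    have "col U i \<noteq> 0\<^sub>v n" using unitary_col_norm[OF assms i(1)] by auto
    then show "r \<in> rspec (U * dmat n f * adj U)"
      unfolding rspec_def eigenvalue_def eigenvector_def using udu_col[OF assms i(1)] i U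
      by (intro CollectI exI[of _ "col U i"]) auto
  qed
  show "rspec (U * dmat n f * adj U) \<subseteq> f ` {..<n}"
  proof
    fix r assume "r \<in> rspec (U * dmat n f * adj U)"
    then obtain v where v: "v \<in> carrier_vec n" "v \<noteq> 0\<^sub>v n"
      "(U * dmat n f * adj U) *\<^sub>v v = complex_of_real r \<cdot>\<^sub>v v"
      unfolding rspec_def eigenvalue_def eigenvector_def using U by auto
    define c where "c = adj U *\<^sub>v v"
    have c: "c \<in> carrier_vec n" using U v by (simp add: c_def)
    have "c \<noteq> 0\<^sub>v n"
    proof
      assume "c = 0\<^sub>v n"
      then have "U *\<^sub>v c = 0\<^sub>v n" using U by simp
      then show False using unitary_adj_mult_vec(1)[OF assms v(1)] v(2) by (simp add: c_def)
    qed
    then obtain k where k: "k < n" "c $ k \<noteq> 0" using c by (metis eq_vecI carrier_vecD index_zero_vec)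
    have "U *\<^sub>v (dmat n f *\<^sub>v c) = complex_of_real r \<cdot>\<^sub>v v"
      using v(3) udu_mult_vec[OF assms v(1)] by (simp add: c_def)
    then have "adj U *\<^sub>v (U *\<^sub>v (dmat n f *\<^sub>v c)) = adj U *\<^sub>v (complex_of_real r \<cdot>\<^sub>v v)" by simp
    moreover have "adj U *\<^sub>v (U *\<^sub>v (dmat n f *\<^sub>v c)) = dmat n f *\<^sub>v c"
      using unitary_adj_mult_vec(2)[OF assms] c by simp
    moreover have "adj U *\<^sub>v (complex_of_real r \<cdot>\<^sub>v v) = complex_of_real r \<cdot>\<^sub>v c"
      unfolding c_def by (rule mult_mat_vec[of "adj U" n n v]) (use U v in auto)
    ultimately have eq: "dmat n f *\<^sub>v c = complex_of_real r \<cdot>\<^sub>v c" by simp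
    have "complex_of_real (f k) * c $ k = complex_of_real r * c $ k"
      using arg_cong[OF eq, of "\<lambda>w. w $ k"] k c by (simp add: dmat_mult_vec)
    then have "f k = r" using k by simp
    then show "r \<in> f ` {..<n}" using k by auto
  qed
qed

lemma mat_eq_by_vec: assumes M: "(M::complex mat) \<in> carrier_mat n m" and N: "N \<in> carrier_mat n m"
  and eq: "\<And>x. x \<in> carrier_vec m \<Longrightarrow> M *\<^sub>v x = N *\<^sub>v x"
  shows "M = N"
proof (rule eq_matI)
  fix i j assume i: "i < dim_row N" and j: "j < dim_col N"
  have "M $$ (i,j) = (M *\<^sub>v unit_vec m j) $ i" using M N i j by simp
  also have "\<dots> = (N *\<^sub>v unit_vec m j) $ i" using eq[of "unit_vec m j"] by simp
  also have "\<dots> = N $$ (i,j)" using N i j by simp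
  finally show "M $$ (i,j) = N $$ (i,j)" .
qed (use M N in auto)

lemma mult_mat_vec_assoc: "A \<in> carrier_mat n m \<Longrightarrow> B \<in> carrier_mat m k \<Longrightarrow> x \<in> carrier_vec k \<Longrightarrow>
  (A * B) *\<^sub>v x = A *\<^sub>v (B *\<^sub>v x)"
  by (rule assoc_mult_mat_vec) auto

lemma dmat_cong: "(\<And>i. i < n \<Longrightarrow> f i = g i) \<Longrightarrow> dmat n f = dmat n g"
  by (rule eq_matI) auto

lemma adj_udu: assumes "unitary n U" shows "adj (U * dmat n f * adj U) = U * dmat n f * adj U"
proof -
  have U: "U \<in> carrier_mat n n" using assms unitaryD by auto
  have "adj (U * dmat n f * adj U) = adj (adj U) * adj (U * dmat n f)"
    by (rule adj_mult[of _ n n _ n]) (use U in auto)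
  also have "adj (U * dmat n f) = dmat n f * adj U"
    by (subst adj_mult[of _ n n _ n]) (use U in auto)
  also have "adj (adj U) * (dmat n f * adj U) = U * dmat n f * adj U"
    using U by (simp add: assoc_mult_mat[of _ n n _ n _ n])
  finally show ?thesis .
qed

lemma udu_mult: assumes "unitary n U"
  shows "(U * dmat n f * adj U) * (U * dmat n g * adj U) = U * dmat n (\<lambda>i. f i * g i) * adj U"
proof (rule mat_eq_by_vec[of _ n n])
  have U: "U \<in> carrier_mat n n" using assms unitaryD by auto
  show "(U * dmat n f * adj U) * (U * dmat n g * adj U) \<in> carrier_mat n n"
    using udu_carrier[OF assms] by (metis mult_carrier_mat)
  show "U * dmat n (\<lambda>i. f i * g i) * adj U \<in> carrier_mat n n" using udu_carrier[OF assms] .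
  fix x :: "complex vec" assume x: "x \<in> carrier_vec n"
  define c where "c = adj U *\<^sub>v x"
  have c: "c \<in> carrier_vec n" using U x by (simp add: c_def)
  have "((U * dmat n f * adj U) * (U * dmat n g * adj U)) *\<^sub>v x =
     (U * dmat n f * adj U) *\<^sub>v ((U * dmat n g * adj U) *\<^sub>v x)"
    by (rule mult_mat_vec_assoc[OF udu_carrier[OF assms] udu_carrier[OF assms] x])
  also have "(U * dmat n g * adj U) *\<^sub>v x = U *\<^sub>v (dmat n g *\<^sub>v c)"
    using udu_mult_vec[OF assms x] by (simp add: c_def)
  also have "(U * dmat n f * adj U) *\<^sub>v (U *\<^sub>v (dmat n g *\<^sub>v c)) = U *\<^sub>v (dmat n f *\<^sub>v (dmat n g *\<^sub>v c))"
    using udu_mult_vec[OF assms] unitary_adj_mult_vec(2)[OF assms] c U by simp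
  also have "dmat n f *\<^sub>v (dmat n g *\<^sub>v c) = dmat n (\<lambda>i. f i * g i) *\<^sub>v c"
    using c by (auto simp: dmat_mult_vec intro!: eq_vecI)
  also have "U *\<^sub>v (dmat n (\<lambda>i. f i * g i) *\<^sub>v c) = (U * dmat n (\<lambda>i. f i * g i) * adj U) *\<^sub>v x"
    using udu_mult_vec[OF assms x] by (simp add: c_def)
  finally show "((U * dmat n f * adj U) * (U * dmat n g * adj U)) *\<^sub>v x = (U * dmat n (\<lambda>i. f i * g i) * adj U) *\<^sub>v x" .
qed

lemma udu_one: assumes "unitary n U" "\<And>i. i < n \<Longrightarrow> f i = 1" shows "U * dmat n f * adj U = 1\<^sub>m n"
proof -
  have U: "U \<in> carrier_mat n n" using assms unitaryD by auto
  have "dmat n f = 1\<^sub>m n" using dmat_cong[of n f "\<lambda>_. 1"] assms(2) dmat_one by simp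
  then show ?thesis using U unitaryD(3)[OF assms(1)] by simp
qed

lemma udu_zero: assumes "unitary n U" "\<And>i. i < n \<Longrightarrow> f i = 0" shows "U * dmat n f * adj U = 0\<^sub>m n n"
proof -
  have U: "U \<in> carrier_mat n n" using assms unitaryD by auto
  have "dmat n f = 0\<^sub>m n n" using dmat_cong[of n f "\<lambda>_. 0"] assms(2) dmat_zero by simp
  then show ?thesis using U by simp
qed

lemma qf_real: assumes "A \<in> carrier_mat n n" "adj A = A" "x \<in> carrier_vec n"
  shows "qf A x = complex_of_real (Re (qf A x))"
proof -
  obtain U f where U: "unitary n U" "A = U * dmat n f * adj U" using spectral_mat[OF assms(1,2)] by blast
  show ?thesis unfolding U(2) qf_udu[OF U(1) assms(3)] by simp
qed

lemma qf_zero[simp]: "A \<in> carrier_mat n n \<Longrightarrow> qf A (0\<^sub>v n) = 0"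
  by (simp add: qf_def)

lemma conj_sprod_ip: "dim_vec v = dim_vec w \<Longrightarrow> conjugate v \<bullet> w = ip v w"
  by (auto simp: ip_def scalar_prod_def lessThan_atLeast0 intro!: sum.cong)

lemma psd_iff: "A \<in> carrier_mat n n \<Longrightarrow> psd A \<longleftrightarrow> adj A = A \<and> (\<forall>v\<in>carrier_vec n. 0 \<le> Re (qf A v))"
  by (auto simp: psd_def hermitian_def qf_def conj_sprod_ip)

lemma qf_col_udu: assumes "unitary n U" "i < n" shows "qf (U * dmat n f * adj U) (col U i) = complex_of_real (f i)"
  unfolding qf_def udu_col[OF assms] using unitary_col_norm[OF assms] by simp

lemma psd_eigs: assumes "unitary n U" "psd (U * dmat n f * adj U)" "i < n" shows "0 \<le> f i"
proof -
  have U: "U \<in> carrier_mat n n" using assms unitaryD by auto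
  have "0 \<le> Re (qf (U * dmat n f * adj U) (col U i))"
    using assms(2) psd_iff[OF udu_carrier[OF assms(1)]] U assms(3) by auto
  then show ?thesis using qf_col_udu[OF assms(1,3)] by simp
qed

lemma det_nonzero_eigs: assumes "unitary n U" "det (U * dmat n f * adj U) \<noteq> 0" "i < n" shows "f i \<noteq> 0"
proof
  assume "f i = 0"
  have U: "U \<in> carrier_mat n n" using assms unitaryD by auto
  have "(U * dmat n f * adj U) *\<^sub>v col U i = 0\<^sub>v n" using udu_col[OF assms(1,3)] \<open>f i = 0\<close> U
    by (auto intro!: eq_vecI)
  moreover have "col U i \<noteq> 0\<^sub>v n" using unitary_col_norm[OF assms(1,3)] by auto
  moreover have "col U i \<in> carrier_vec n" using U assms(3) by auto
  ultimately have "det (U * dmat n f * adj U) = 0" using det_0_iff_vec_prod_zero[OF udu_carrier[OF assms(1)]]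
    by blast
  then show False using assms(2) by simp
qed

lemma udu_pos: assumes "unitary n U" "\<And>i. i < n \<Longrightarrow> 0 < f i" "x \<in> carrier_vec n" "x \<noteq> 0\<^sub>v n"
  shows "0 < Re (qf (U * dmat n f * adj U) x)"
proof -
  have U: "U \<in> carrier_mat n n" using assms unitaryD by auto
  define c where "c = adj U *\<^sub>v x"
  have c: "c \<in> carrier_vec n" using U assms by (simp add: c_def)
  have "c \<noteq> 0\<^sub>v n"
  proof
    assume "c = 0\<^sub>v n"
    then have "U *\<^sub>v c = 0\<^sub>v n" using U by simp
    then show False using unitary_adj_mult_vec(1)[OF assms(1,3)] assms(4) by (simp add: c_def)
  qed
  then obtain k where k: "k < n" "c $ k \<noteq> 0" using c by (metis eq_vecI carrier_vecD index_zero_vec)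
  have "0 < f k * (cmod (c $ k))\<^sup>2" using assms(2)[OF k(1)] k(2) by simp
  also have "\<dots> \<le> (\<Sum>i<n. f i * (cmod (c $ i))\<^sup>2)"
    by (rule member_le_sum) (auto simp: k intro!: mult_nonneg_nonneg less_imp_le[OF assms(2)])
  finally show ?thesis unfolding qf_udu[OF assms(1,3)] by (simp add: c_def)
qed

lemma udu_psd: assumes "unitary n U" "\<And>i. i < n \<Longrightarrow> 0 \<le> f i" shows "psd (U * dmat n f * adj U)"
proof -
  have "0 \<le> Re (qf (U * dmat n f * adj U) x)" if "x \<in> carrier_vec n" for x
    unfolding qf_udu[OF assms(1) that] using assms(2) by (auto intro!: sum_nonneg)
  then show ?thesis using psd_iff[OF udu_carrier[OF assms(1)]] adj_udu[OF assms(1)] by auto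
qed

lemma pos_det: assumes "A \<in> carrier_mat n n" "\<And>x. x \<in> carrier_vec n \<Longrightarrow> x \<noteq> 0\<^sub>v n \<Longrightarrow> 0 < Re (qf A x)"
  shows "det A \<noteq> 0"
proof
  assume "det A = 0"
  then obtain v where v: "v \<in> carrier_vec n" "v \<noteq> 0\<^sub>v n" "A *\<^sub>v v = 0\<^sub>v n"
    using det_0_iff_vec_prod_zero[OF assms(1)] by auto
  have "qf A v = 0" using v by (simp add: qf_def)
  then show False using assms(2)[OF v(1,2)] by simp
qed

lemma pd_iff: assumes A: "A \<in> carrier_mat n n"
  shows "pd A \<longleftrightarrow> adj A = A \<and> (\<forall>x\<in>carrier_vec n. x \<noteq> 0\<^sub>v n \<longrightarrow> 0 < Re (qf A x))"
proof
  assume pd: "pd A"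
  then have h: "adj A = A" using psd_iff[OF A] by (auto simp: pd_def)
  obtain U f where U: "unitary n U" "A = U * dmat n f * adj U" using spectral_mat[OF A h] by blast
  have "0 < f i" if "i < n" for i
    using psd_eigs[OF U(1) _ that] det_nonzero_eigs[OF U(1) _ that] pd U(2) unfolding pd_def
    by force
  then show "adj A = A \<and> (\<forall>x\<in>carrier_vec n. x \<noteq> 0\<^sub>v n \<longrightarrow> 0 < Re (qf A x))"
    using h udu_pos[OF U(1)] U(2) by auto
next
  assume r: "adj A = A \<and> (\<forall>x\<in>carrier_vec n. x \<noteq> 0\<^sub>v n \<longrightarrow> 0 < Re (qf A x))"
  have "psd A" unfolding psd_iff[OF A]
  proof (intro conjI ballI)
    fix v :: "complex vec" assume v: "v \<in> carrier_vec n"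
    show "0 \<le> Re (qf A v)" using r v A by (cases "v = 0\<^sub>v n") (auto intro: less_imp_le)
  qed (use r in simp)
  moreover have "det A \<noteq> 0" using pos_det[OF A] r by blast
  ultimately show "pd A" by (simp add: pd_def)
qed

lemma pd_eigs: assumes "unitary n U" "pd (U * dmat n f * adj U)" "i < n" shows "0 < f i"
  using psd_eigs[OF assms(1) _ assms(3)] det_nonzero_eigs[OF assms(1) _ assms(3)] assms(2)
  unfolding pd_def by force

lemma udu_pd: assumes "unitary n U" "\<And>i. i < n \<Longrightarrow> 0 < f i" shows "pd (U * dmat n f * adj U)"
  unfolding pd_iff[OF udu_carrier[OF assms(1)]] using adj_udu[OF assms(1)] udu_pos[OF assms] by auto

lemma lambda_facts: assumes A: "A \<in> carrier_mat n n" and h: "adj A = A" and n: "0 < n"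
  shows "lambda_max A \<in> rspec A" "lambda_min A \<in> rspec A"
    "\<And>x. x \<in> carrier_vec n \<Longrightarrow> Re (qf A x) \<le> lambda_max A * Re (ip x x)"
    "\<And>x. x \<in> carrier_vec n \<Longrightarrow> lambda_min A * Re (ip x x) \<le> Re (qf A x)"
    "\<And>r. r \<in> rspec A \<Longrightarrow> lambda_min A \<le> r \<and> r \<le> lambda_max A"
proof -
  obtain U f where U: "unitary n U" "A = U * dmat n f * adj U" using spectral_mat[OF A h] by blast
  have rs: "rspec A = f ` {..<n}" using rspec_udu[OF U(1)] U(2) by simp
  have fin: "finite (rspec A)" and ne: "rspec A \<noteq> {}" using rs n by auto
  show "lambda_max A \<in> rspec A" unfolding lambda_max_def using Max_in[OF fin ne] .
  show "lambda_min A \<in> rspec A" unfolding lambda_min_def using Min_in[OF fin ne] .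
  have fle: "f i \<le> lambda_max A" "lambda_min A \<le> f i" if "i < n" for i
    unfolding lambda_max_def lambda_min_def using rs that fin by auto
  show "\<And>r. r \<in> rspec A \<Longrightarrow> lambda_min A \<le> r \<and> r \<le> lambda_max A"
    unfolding lambda_max_def lambda_min_def using fin by auto
  fix x :: "complex vec" assume x: "x \<in> carrier_vec n"
  define c where "c = adj U *\<^sub>v x"
  have q: "Re (qf A x) = (\<Sum>i<n. f i * (cmod (c $ i))\<^sup>2)" using qf_udu[OF U(1) x] U(2) by (simp add: c_def)
  have p: "Re (ip x x) = (\<Sum>i<n. (cmod (c $ i))\<^sup>2)" using ip_self_unitary[OF U(1) x] by (simp add: c_def)
  have "(\<Sum>i<n. f i * (cmod (c $ i))\<^sup>2) \<le> (\<Sum>i<n. lambda_max A * (cmod (c $ i))\<^sup>2)"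
    by (rule sum_mono) (auto intro!: mult_right_mono fle)
  then show "Re (qf A x) \<le> lambda_max A * Re (ip x x)" unfolding q p by (simp add: sum_distrib_left)
  have "(\<Sum>i<n. lambda_min A * (cmod (c $ i))\<^sup>2) \<le> (\<Sum>i<n. f i * (cmod (c $ i))\<^sup>2)"
    by (rule sum_mono) (auto intro!: mult_right_mono fle)
  then show "lambda_min A * Re (ip x x) \<le> Re (qf A x)" unfolding q p by (simp add: sum_distrib_left)
qed

lemma pd_lambda_pos: assumes A: "A \<in> carrier_mat n n" and pd: "pd A" and n: "0 < n"
  shows "0 < lambda_min A" "0 < lambda_max A"
proof -
  have h: "adj A = A" using pd_iff[OF A] pd by auto
  obtain U f where U: "unitary n U" "A = U * dmat n f * adj U" using spectral_mat[OF A h] by blast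
  have rs: "rspec A = f ` {..<n}" using rspec_udu[OF U(1)] U(2) by simp
  have pos: "0 < r" if "r \<in> rspec A" for r using that rs pd_eigs[OF U(1)] pd U(2) by auto
  show "0 < lambda_min A" "0 < lambda_max A" using pos lambda_facts(1,2)[OF A h n] by auto
qed

lemma pd_qf_pos: "A \<in> carrier_mat n n \<Longrightarrow> pd A \<Longrightarrow> x \<in> carrier_vec n \<Longrightarrow> x \<noteq> 0\<^sub>v n \<Longrightarrow> 0 < Re (qf A x)"
  using pd_iff by blast

lemma pd_adj: "A \<in> carrier_mat n n \<Longrightarrow> pd A \<Longrightarrow> adj A = A"
  using pd_iff by blast

lemma pd_sqrt_unique: assumes B: "B \<in> carrier_mat n n" and C: "C \<in> carrier_mat n n"
  and A: "A \<in> carrier_mat n n" and pB: "pd B" and pC: "pd C"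
  and BA: "B * B * A = 1\<^sub>m n" and CA: "C * C * A = 1\<^sub>m n"
  shows "B = C"
proof -
  have BB: "B * B \<in> carrier_mat n n" and CC: "C * C \<in> carrier_mat n n" using B C by auto
  have ACC: "A * (C * C) = 1\<^sub>m n" using mat_mult_left_right_inverse[OF CC A CA] .
  have "B * B = (B * B) * (A * (C * C))" using ACC BB by (simp add: right_mult_one_mat)
  also have "\<dots> = ((B * B) * A) * (C * C)" using BB A CC by (simp add: assoc_mult_mat[of _ n n _ n _ n])
  also have "\<dots> = C * C" using BA CC by (simp add: left_mult_one_mat)
  finally have BBCC: "B * B = C * C" .
  have hB: "adj B = B" and hC: "adj C = C" using pd_adj B C pB pC by auto
  define E where "E = B - C"
  have E: "E \<in> carrier_mat n n" unfolding E_def by (rule minus_carrier_mat[OF C])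
  have hE: "adj E = E" unfolding E_def using adj_minus[OF B C] hB hC by simp
  obtain U f where U: "unitary n U" "E = U * dmat n f * adj U" using spectral_mat[OF E hE] by blast
  have Uc: "U \<in> carrier_mat n n" using U unitaryD by auto
  have f0: "f i = 0" if i: "i < n" for i
  proof -
    define v where "v = col U i"
    define \<mu> where "\<mu> = complex_of_real (f i)"
    have v: "v \<in> carrier_vec n" "v \<noteq> 0\<^sub>v n" using Uc i unitary_col_norm[OF U(1) i] by (auto simp: v_def)
    have Ev: "E *\<^sub>v v = \<mu> \<cdot>\<^sub>v v" using udu_col[OF U(1) i] U(2) by (simp add: v_def \<mu>_def)
    have Ew: "E *\<^sub>v w = B *\<^sub>v w - C *\<^sub>v w" if "w \<in> carrier_vec n" for w
      unfolding E_def by (rule minus_mult_distrib_mat_vec[OF B C that])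
    have BBv: "B *\<^sub>v (B *\<^sub>v v) = C *\<^sub>v (C *\<^sub>v v)"
      using mult_mat_vec_assoc[OF B B v(1)] mult_mat_vec_assoc[OF C C v(1)] BBCC by simp
    have Bv: "B *\<^sub>v v \<in> carrier_vec n" and Cv: "C *\<^sub>v v \<in> carrier_vec n" using B C v by auto
    have "ip v (B *\<^sub>v (E *\<^sub>v v)) + ip v (E *\<^sub>v (C *\<^sub>v v))
      = ip v (B *\<^sub>v (B *\<^sub>v v) - B *\<^sub>v (C *\<^sub>v v)) + ip v (B *\<^sub>v (C *\<^sub>v v) - C *\<^sub>v (C *\<^sub>v v))"
      unfolding Ew[OF v(1)] Ew[OF Cv] mult_minus_distrib_mat_vec[OF B Bv Cv] ..
    also have "\<dots> = 0" using B C Bv Cv BBv by (simp add: ip_minus2)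
    finally have z: "ip v (B *\<^sub>v (E *\<^sub>v v)) + ip v (E *\<^sub>v (C *\<^sub>v v)) = 0" .
    have "ip v (B *\<^sub>v (E *\<^sub>v v)) = \<mu> * qf B v"
      unfolding Ev qf_def mult_mat_vec[OF B v(1)] by simp
    moreover have "ip v (E *\<^sub>v (C *\<^sub>v v)) = \<mu> * qf C v"
    proof -
      have "ip v (E *\<^sub>v (C *\<^sub>v v)) = ip (E *\<^sub>v v) (C *\<^sub>v v)" by (rule hermitian_ip[OF E hE v(1) Cv])
      also have "\<dots> = cnj \<mu> * qf C v" unfolding Ev qf_def by (rule ip_smult1) (use v C in auto)
      finally show ?thesis by (simp add: \<mu>_def)
    qed
    ultimately have "\<mu> * (qf B v + qf C v) = 0" using z by (simp add: distrib_left)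
    then have eq0: "\<mu> * (qf B v + qf C v) = 0" .
    define a where "a = Re (qf B v)"
    define b where "b = Re (qf C v)"
    have qB: "qf B v = complex_of_real a" unfolding a_def by (rule qf_real[OF B hB v(1)])
    have qC: "qf C v = complex_of_real b" unfolding b_def by (rule qf_real[OF C hC v(1)])
    have "complex_of_real (f i * (a + b)) = 0" using eq0 unfolding qB qC \<mu>_def
      by (simp only: of_real_add[symmetric] of_real_mult[symmetric])
    then have "f i * (a + b) = 0" by (simp only: of_real_eq_0_iff)
    moreover have "0 < a + b" using pd_qf_pos[OF B pB v] pd_qf_pos[OF C pC v] by (simp add: a_def b_def)
    ultimately show "f i = 0" by simp
  qed
  have "E = 0\<^sub>m n n" using udu_zero[OF U(1) f0] U(2) by simp
  then show "B = C"
  proof -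
    assume E0: "E = 0\<^sub>m n n"
    show "B = C"
    proof (rule eq_matI)
      fix i j assume "i < dim_row C" "j < dim_col C"
      then have "i < n" "j < n" using C by auto
      then have "E $$ (i,j) = 0" using E0 by simp
      then show "B $$ (i,j) = C $$ (i,j)" unfolding E_def using B C \<open>i < n\<close> \<open>j < n\<close> by simp
    qed (use B C in auto)
  qed
qed

lemma inv_sqrt_props: assumes A: "A \<in> carrier_mat n n" and pA: "pd A"
  shows "inv_sqrt A \<in> carrier_mat n n \<and> pd (inv_sqrt A) \<and> inv_sqrt A * inv_sqrt A * A = 1\<^sub>m n"
proof -
  have dr: "dim_row A = n" using A by simp
  have h: "adj A = A" using pd_adj A pA by auto
  obtain U f where U: "unitary n U" "A = U * dmat n f * adj U" using spectral_mat[OF A h] by blast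
  have fpos: "0 < f i" if "i < n" for i using pd_eigs[OF U(1) _ that] pA U(2) by simp
  define g where "g i = 1 / sqrt (f i)" for i
  define B0 where "B0 = U * dmat n g * adj U"
  have P0: "B0 \<in> carrier_mat n n \<and> pd B0 \<and> B0 * B0 * A = 1\<^sub>m n"
  proof (intro conjI)
    show "B0 \<in> carrier_mat n n" using udu_carrier[OF U(1)] by (simp add: B0_def)
    show "pd B0" unfolding B0_def by (rule udu_pd[OF U(1)]) (use fpos in \<open>simp add: g_def\<close>)
    have "B0 * B0 * A = U * dmat n (\<lambda>i. g i * g i * f i) * adj U"
      unfolding B0_def U(2) udu_mult[OF U(1)] ..
    also have "\<dots> = 1\<^sub>m n"
    proof (rule udu_one[OF U(1)])
      fix i assume "i < n"
      then have "0 < f i" by (rule fpos)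
      then show "g i * g i * f i = 1" by (simp add: g_def field_simps)
    qed
    finally show "B0 * B0 * A = 1\<^sub>m n" .
  qed
  have "inv_sqrt A = B0" unfolding inv_sqrt_def dr
  proof (rule the_equality)
    show "B0 \<in> carrier_mat n n \<and> pd B0 \<and> B0 * B0 * A = 1\<^sub>m n" by (rule P0)
    fix B assume "B \<in> carrier_mat n n \<and> pd B \<and> B * B * A = 1\<^sub>m n"
    then show "B = B0" using pd_sqrt_unique[OF _ _ A] P0 by blast
  qed
  then show ?thesis using P0 by simp
qed

lemma ctrace_comm: assumes A: "A \<in> carrier_mat n m" and B: "B \<in> carrier_mat m n"
  shows "ctrace (A * B) = ctrace (B * A)"
proof -
  have "ctrace (A * B) = (\<Sum>i<n. \<Sum>k<m. A $$ (i,k) * B $$ (k,i))"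
    using A B by (auto simp: ctrace_def scalar_prod_def lessThan_atLeast0 intro!: sum.cong)
  also have "\<dots> = (\<Sum>k<m. \<Sum>i<n. B $$ (k,i) * A $$ (i,k))"
    by (subst sum.swap) (simp add: mult.commute)
  also have "\<dots> = ctrace (B * A)"
    using A B by (auto simp: ctrace_def scalar_prod_def lessThan_atLeast0 intro!: sum.cong)
  finally show ?thesis .
qed

lemma ctrace_minus: "A \<in> carrier_mat n n \<Longrightarrow> B \<in> carrier_mat n n \<Longrightarrow> ctrace (A - B) = ctrace A - ctrace B"
  by (auto simp: ctrace_def sum_subtractf)

lemma ctrace_smult: "A \<in> carrier_mat n n \<Longrightarrow> ctrace (c \<cdot>\<^sub>m A) = c * ctrace A"
  by (auto simp: ctrace_def sum_distrib_left)

lemma ctrace_one: "ctrace (1\<^sub>m n) = of_nat n"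
  by (simp add: ctrace_def)

lemma ctrace_dmat_right: assumes M: "M \<in> carrier_mat n n"
  shows "ctrace (M * dmat n f) = (\<Sum>i<n. M $$ (i,i) * complex_of_real (f i))"
proof -
  have "(M * dmat n f) $$ (i,i) = M $$ (i,i) * complex_of_real (f i)" if i: "i < n" for i
  proof -
    have "(M * dmat n f) $$ (i,i) = (\<Sum>k\<in>{0..<n}. M $$ (i,k) * (if k = i then complex_of_real (f i) else 0))"
      using M i by (auto simp: scalar_prod_def intro!: sum.cong)
    also have "\<dots> = M $$ (i,i) * complex_of_real (f i)" using i by (rule sum_if_mult2)
    finally show ?thesis .
  qed
  then show ?thesis using M by (simp add: ctrace_def)
qed

lemma smult_mat_mult_vec: "M \<in> carrier_mat n m \<Longrightarrow> x \<in> carrier_vec m \<Longrightarrow> (c \<cdot>\<^sub>m M) *\<^sub>v x = c \<cdot>\<^sub>v (M *\<^sub>v x)"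
  by (rule eq_vecI) (auto simp: scalar_prod_def sum_distrib_left ac_simps)

lemma trace_psd_nonneg: assumes X: "X \<in> carrier_mat n n" and Q: "Q \<in> carrier_mat n n"
  and pX: "psd X" and pQ: "psd Q"
  shows "0 \<le> Re (ctrace (X * Q))"
proof -
  have hQ: "adj Q = Q" using pQ psd_iff[OF Q] by auto
  obtain U f where U: "unitary n U" "Q = U * dmat n f * adj U" using spectral_mat[OF Q hQ] by blast
  have Uc: "U \<in> carrier_mat n n" using U unitaryD by auto
  have f0: "0 \<le> f i" if "i < n" for i using psd_eigs[OF U(1) _ that] pQ U(2) by simp
  have D: "dmat n f \<in> carrier_mat n n" by simp
  have "X * Q = (X * (U * dmat n f)) * adj U" unfolding U(2)
    using X Uc by (simp add: assoc_mult_mat[of _ n n _ n _ n])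
  then have "ctrace (X * Q) = ctrace (adj U * (X * (U * dmat n f)))"
    using ctrace_comm[of "X * (U * dmat n f)" n n "adj U"] X Uc by simp
  also have "adj U * (X * (U * dmat n f)) = (adj U * (X * U)) * dmat n f"
    using X Uc by (simp add: assoc_mult_mat[of _ n n _ n _ n])
  also have "ctrace \<dots> = (\<Sum>i<n. (adj U * (X * U)) $$ (i,i) * complex_of_real (f i))"
    by (rule ctrace_dmat_right) (use X Uc in \<open>metis adj_carrier_mat mult_carrier_mat\<close>)
  also have "\<dots> = (\<Sum>i<n. qf X (col U i) * complex_of_real (f i))"
  proof (rule sum.cong)
    fix i assume "i \<in> {..<n}"
    then have i: "i < n" by simp
    have "(adj U * (X * U)) $$ (i,i) = ip (col U i) (col (X * U) i)"
      by (rule adj_mult_index[of _ n n _ n]) (use X Uc i in auto)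
    also have "col (X * U) i = X *\<^sub>v col U i" by (rule col_mult2[OF X Uc i])
    finally show "(adj U * (X * U)) $$ (i,i) * complex_of_real (f i) = qf X (col U i) * complex_of_real (f i)"
      by (simp add: qf_def)
  qed simp
  finally have "Re (ctrace (X * Q)) = (\<Sum>i<n. Re (qf X (col U i)) * f i)" by simp
  also have "0 \<le> \<dots>"
  proof (rule sum_nonneg)
    fix i assume "i \<in> {..<n}"
    then have i: "i < n" by simp
    have "0 \<le> Re (qf X (col U i))" using pX psd_iff[OF X] Uc i by auto
    then show "0 \<le> Re (qf X (col U i)) * f i" using f0[OF i] by simp
  qed
  finally show ?thesis .
qed

definition outer :: "complex vec \<Rightarrow> complex mat" where
  "outer v = mat (dim_vec v) (dim_vec v) (\<lambda>(i,j). v $ i * cnj (v $ j))"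

lemma outer_carrier[simp]: "v \<in> carrier_vec n \<Longrightarrow> outer v \<in> carrier_mat n n"
  by (auto simp: outer_def)

lemma adj_outer: "adj (outer v) = outer v"
  by (rule eq_matI) (auto simp: outer_def adj_def mult.commute)

lemma outer_mult_vec: assumes "v \<in> carrier_vec n" "w \<in> carrier_vec n"
  shows "outer v *\<^sub>v w = ip v w \<cdot>\<^sub>v v"
  by (rule eq_vecI) (use assms in \<open>auto simp: outer_def ip_def scalar_prod_def sum_distrib_left lessThan_atLeast0 ac_simps intro!: sum.cong\<close>)

lemma qf_outer: assumes "v \<in> carrier_vec n" "w \<in> carrier_vec n"
  shows "qf (outer v) w = complex_of_real ((cmod (ip v w))\<^sup>2)"
proof -
  have "qf (outer v) w = ip v w * ip w v" unfolding qf_def outer_mult_vec[OF assms] by simp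
  also have "ip w v = cnj (ip v w)" by (rule ip_cnj) (use assms in auto)
  finally show ?thesis using complex_norm_square[of "ip v w"] by simp
qed

lemma ctrace_outer: assumes X: "X \<in> carrier_mat n n" and v: "v \<in> carrier_vec n"
  shows "ctrace (X * outer v) = qf X v"
proof -
  have "ctrace (X * outer v) = (\<Sum>i<n. \<Sum>k\<in>{0..<n}. X $$ (i,k) * (v $ k * cnj (v $ i)))"
    using X v by (auto simp: ctrace_def outer_def scalar_prod_def intro!: sum.cong)
  also have "\<dots> = qf X v"
    using X v by (auto simp: qf_def ip_def scalar_prod_def sum_distrib_left ac_simps intro!: sum.cong)
  finally show ?thesis .
qed

lemma cauchy_schwarz_unit: assumes v: "v \<in> carrier_vec n" and v1: "ip v v = 1" and w: "w \<in> carrier_vec n"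
  shows "(cmod (ip v w))\<^sup>2 \<le> Re (ip w w)"
proof -
  have v0: "v \<noteq> 0\<^sub>v n" using v1 v by auto
  have n: "0 < n" using v v0 by (cases n) auto
  obtain ws where ws: "length ws = n" "orthonormal n ws"
    "ws!0 = complex_of_real (1 / sqrt (Re (ip v v))) \<cdot>\<^sub>v v" using orth_completion[OF v v0] by blast
  have ws0: "ws!0 = v" using ws(3) v1 by simp
  define W where "W = mat_of_cols n ws"
  have Wc: "W \<in> carrier_mat n n" using mat_of_cols_carrier(1)[of n ws] ws(1) by (simp add: W_def)
  have un: "unitary n W" unfolding unitary_def using orthonormal_unitary[OF ws(2,1)] Wc by (simp add: W_def)
  have c0: "(adj W *\<^sub>v w) $ 0 = ip v w"
    using adj_mult_vec_index[OF Wc w n] orthonormal_col[OF ws(2)] ws(1) n ws0 by (simp add: W_def)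
  have "(cmod (ip v w))\<^sup>2 \<le> (\<Sum>i<n. (cmod ((adj W *\<^sub>v w) $ i))\<^sup>2)"
    using member_le_sum[of 0 "{..<n}" "\<lambda>i. (cmod ((adj W *\<^sub>v w) $ i))\<^sup>2"] n c0 by simp
  also have "\<dots> = Re (ip w w)" using ip_self_unitary[OF un w] by simp
  finally show ?thesis .
qed

lemma qf_smult: "M \<in> carrier_mat n n \<Longrightarrow> x \<in> carrier_vec n \<Longrightarrow> qf (c \<cdot>\<^sub>m M) x = c * qf M x"
  by (simp add: qf_def smult_mat_mult_vec)

lemma rank_one_psd: assumes v: "v \<in> carrier_vec n" and v1: "ip v v = 1" and t: "0 \<le> t" "t \<le> 1"
  shows "psd (complex_of_real t \<cdot>\<^sub>m outer v)" "psd (1\<^sub>m n - complex_of_real t \<cdot>\<^sub>m outer v)"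
proof -
  have O: "outer v \<in> carrier_mat n n" using v by simp
  have Q: "complex_of_real t \<cdot>\<^sub>m outer v \<in> carrier_mat n n" using O by simp
  have hQ: "adj (complex_of_real t \<cdot>\<^sub>m outer v) = complex_of_real t \<cdot>\<^sub>m outer v"
    by (simp add: adj_smult adj_outer)
  have qQ: "qf (complex_of_real t \<cdot>\<^sub>m outer v) w = complex_of_real (t * (cmod (ip v w))\<^sup>2)"
    if w: "w \<in> carrier_vec n" for w
    using qf_smult[OF O w] qf_outer[OF v w] by simp
  show "psd (complex_of_real t \<cdot>\<^sub>m outer v)" unfolding psd_iff[OF Q]
    using hQ qQ t by auto
  have R: "1\<^sub>m n - complex_of_real t \<cdot>\<^sub>m outer v \<in> carrier_mat n n" by (rule minus_carrier_mat[OF Q])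
  have hR: "adj (1\<^sub>m n - complex_of_real t \<cdot>\<^sub>m outer v) = 1\<^sub>m n - complex_of_real t \<cdot>\<^sub>m outer v"
    using adj_minus[of "1\<^sub>m n" n n "complex_of_real t \<cdot>\<^sub>m outer v"] Q hQ by simp
  have "0 \<le> Re (qf (1\<^sub>m n - complex_of_real t \<cdot>\<^sub>m outer v) w)" if w: "w \<in> carrier_vec n" for w
  proof -
    have Qw: "(complex_of_real t \<cdot>\<^sub>m outer v) *\<^sub>v w \<in> carrier_vec n" using Q w by simp
    have "qf (1\<^sub>m n - complex_of_real t \<cdot>\<^sub>m outer v) w = ip w w - qf (complex_of_real t \<cdot>\<^sub>m outer v) w"
    proof -
      have "ip w (w - (complex_of_real t \<cdot>\<^sub>m outer v) *\<^sub>v w) = ip w w - ip w ((complex_of_real t \<cdot>\<^sub>m outer v) *\<^sub>v w)"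
        by (rule ip_minus2) (use w O in auto)
      then show ?thesis unfolding qf_def using minus_mult_distrib_mat_vec[OF one_carrier_mat Q w] w by simp
    qed
    then have "Re (qf (1\<^sub>m n - complex_of_real t \<cdot>\<^sub>m outer v) w) = Re (ip w w) - t * (cmod (ip v w))\<^sup>2"
      using qQ[OF w] by simp
    moreover have "t * (cmod (ip v w))\<^sup>2 \<le> 1 * (cmod (ip v w))\<^sup>2" using t by (intro mult_right_mono) auto
    ultimately show ?thesis using cauchy_schwarz_unit[OF v v1 w] by simp
  qed
  then show "psd (1\<^sub>m n - complex_of_real t \<cdot>\<^sub>m outer v)" unfolding psd_iff[OF R] using hR by auto
qed

lemma ctrace_rank_one: assumes X: "X \<in> carrier_mat n n" and v: "v \<in> carrier_vec n"
  shows "ctrace (X * (c \<cdot>\<^sub>m outer v)) = c * qf X v"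
proof -
  have "X * (c \<cdot>\<^sub>m outer v) = c \<cdot>\<^sub>m (X * outer v)" by (rule mult_smult_distrib[OF X outer_carrier[OF v]])
  moreover have "X * outer v \<in> carrier_mat n n" using X v by (metis outer_carrier mult_carrier_mat)
  ultimately show ?thesis using ctrace_smult ctrace_outer[OF X v] by simp
qed

lemma qf_scale: assumes A: "A \<in> carrier_mat n n" and x: "x \<in> carrier_vec n"
  shows "qf A (c \<cdot>\<^sub>v x) = cnj c * c * qf A x"
proof -
  have "qf A (c \<cdot>\<^sub>v x) = ip (c \<cdot>\<^sub>v x) (c \<cdot>\<^sub>v (A *\<^sub>v x))" unfolding qf_def mult_mat_vec[OF A x] ..
  also have "\<dots> = cnj c * ip x (c \<cdot>\<^sub>v (A *\<^sub>v x))" by (rule ip_smult1) (use A x in auto)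
  finally show ?thesis by (simp add: qf_def)
qed

lemma GL: assumes A: "A \<in> carrier_mat n n" and B: "B \<in> carrier_mat n n" and pA: "pd A" and pB: "pd B"
  and n: "0 < n"
  defines "lam \<equiv> lambda_max (inv_sqrt B * A * inv_sqrt B)"
  shows "0 < lam"
    "\<And>Q. Q \<in> carrier_mat n n \<Longrightarrow> psd Q \<Longrightarrow> Re (ctrace (A * Q)) \<le> lam * Re (ctrace (B * Q))"
    "\<exists>v\<in>carrier_vec n. ip v v = 1 \<and> Re (qf A v) = lam * Re (qf B v)"
proof -
  define S where "S = inv_sqrt B"
  have S: "S \<in> carrier_mat n n" "pd S" "S * S * B = 1\<^sub>m n" using inv_sqrt_props[OF B pB] by (auto simp: S_def)
  have hS: "adj S = S" using pd_adj S by auto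
  have hA: "adj A = A" using pd_adj A pA by auto
  have hB: "adj B = B" using pd_adj B pB by auto
  have SB: "S * B \<in> carrier_mat n n" using S B by auto
  have S_SB: "S * (S * B) = 1\<^sub>m n" using S B by (simp add: assoc_mult_mat[of _ n n _ n _ n])
  have SB_S: "(S * B) * S = 1\<^sub>m n" using mat_mult_left_right_inverse[OF S(1) SB S_SB] .
  define M where "M = S * A * S"
  have M: "M \<in> carrier_mat n n" using S A by (simp add: M_def)
  have hM: "adj M = M"
  proof -
    have "adj M = adj S * adj (S * A)" unfolding M_def by (rule adj_mult[of _ n n _ n]) (use S A in auto)
    also have "adj (S * A) = adj A * adj S" by (rule adj_mult[of _ n n _ n]) (use S A in auto)
    finally show ?thesis using S A hS hA by (simp add: M_def assoc_mult_mat[of _ n n _ n _ n])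
  qed
  have qfM: "qf M w = qf A (S *\<^sub>v w)" if w: "w \<in> carrier_vec n" for w
  proof -
    have "M *\<^sub>v w = S *\<^sub>v (A *\<^sub>v (S *\<^sub>v w))" unfolding M_def
      using mult_mat_vec_assoc[of "S * A" n n S n w] mult_mat_vec_assoc[of S n n A n "S *\<^sub>v w"] S A w by auto
    then have "qf M w = ip w (S *\<^sub>v (A *\<^sub>v (S *\<^sub>v w)))" by (simp add: qf_def)
    also have "\<dots> = ip (S *\<^sub>v w) (A *\<^sub>v (S *\<^sub>v w))" by (rule hermitian_ip[OF S(1) hS w]) (use A S w in auto)
    finally show ?thesis by (simp add: qf_def)
  qed
  have qfB: "qf B (S *\<^sub>v w) = ip w w" if w: "w \<in> carrier_vec n" for w
  proof -
    have "qf B (S *\<^sub>v w) = ip (S *\<^sub>v w) (B *\<^sub>v (S *\<^sub>v w))" by (simp add: qf_def)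
    also have "\<dots> = ip w (S *\<^sub>v (B *\<^sub>v (S *\<^sub>v w)))" by (rule hermitian_ip[OF S(1) hS w, symmetric]) (use B S w in auto)
    also have "S *\<^sub>v (B *\<^sub>v (S *\<^sub>v w)) = ((S * B) * S) *\<^sub>v w"
      using mult_mat_vec_assoc[of "S * B" n n S n w] mult_mat_vec_assoc[of S n n B n "S *\<^sub>v w"] S B w by auto
    finally show ?thesis using SB_S w by simp
  qed
  have Sinj: "S *\<^sub>v w \<noteq> 0\<^sub>v n" if "w \<in> carrier_vec n" "w \<noteq> 0\<^sub>v n" for w
  proof
    assume "S *\<^sub>v w = 0\<^sub>v n"
    then have "(S * B) *\<^sub>v (S *\<^sub>v w) = 0\<^sub>v n" using SB by simp
    moreover have "(S * B) *\<^sub>v (S *\<^sub>v w) = w" using mult_mat_vec_assoc[OF SB S(1) that(1)] SB_S that(1) by simp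
    ultimately show False using that by simp
  qed
  have pM: "pd M" unfolding pd_iff[OF M]
    using hM qfM pd_qf_pos[OF A pA] Sinj S(1) by auto
  have lam: "lam = lambda_max M" unfolding lam_def M_def S_def ..
  show lpos: "0 < lam" using pd_lambda_pos[OF M pM n] lam by simp
  have key: "Re (qf A v) \<le> lam * Re (qf B v)" if v: "v \<in> carrier_vec n" for v
  proof -
    define w where "w = (S * B) *\<^sub>v v"
    have w: "w \<in> carrier_vec n" using SB v by (simp add: w_def)
    have Sw: "S *\<^sub>v w = v" unfolding w_def using mult_mat_vec_assoc[OF S(1) SB v] S_SB v by simp
    have "Re (qf A v) = Re (qf M w)" using qfM[OF w] Sw by simp
    also have "\<dots> \<le> lambda_max M * Re (ip w w)" using lambda_facts(3)[OF M hM n w] .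
    also have "ip w w = qf B v" using qfB[OF w] Sw by simp
    finally show ?thesis using lam by simp
  qed
  show "Re (ctrace (A * Q)) \<le> lam * Re (ctrace (B * Q))" if Q: "Q \<in> carrier_mat n n" "psd Q" for Q
  proof -
    define X where "X = complex_of_real lam \<cdot>\<^sub>m B - A"
    have X: "X \<in> carrier_mat n n" unfolding X_def by (rule minus_carrier_mat[OF A])
    have hX: "adj X = X" unfolding X_def using adj_minus[of "complex_of_real lam \<cdot>\<^sub>m B" n n A] A B hA hB
      by (simp add: adj_smult)
    have "0 \<le> Re (qf X v)" if v: "v \<in> carrier_vec n" for v
    proof -
      have "X *\<^sub>v v = complex_of_real lam \<cdot>\<^sub>v (B *\<^sub>v v) - A *\<^sub>v v"
        unfolding X_def using minus_mult_distrib_mat_vec[of "complex_of_real lam \<cdot>\<^sub>m B" n n A v] A B v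
        by (simp add: smult_mat_mult_vec)
      then have "qf X v = complex_of_real lam * qf B v - qf A v"
        unfolding qf_def using A B v by (simp add: ip_minus2)
      then show ?thesis using key[OF v] by simp
    qed
    then have pX: "psd X" unfolding psd_iff[OF X] using hX by auto
    have "0 \<le> Re (ctrace (X * Q))" by (rule trace_psd_nonneg[OF X Q(1) pX Q(2)])
    also have "X * Q = complex_of_real lam \<cdot>\<^sub>m (B * Q) - A * Q"
      unfolding X_def using minus_mult_distrib_mat[of "complex_of_real lam \<cdot>\<^sub>m B" n n A Q n] A B Q
      by (simp add: mult_smult_assoc_mat[OF B Q(1)])
    also have "ctrace \<dots> = complex_of_real lam * ctrace (B * Q) - ctrace (A * Q)"
      using ctrace_minus[of "complex_of_real lam \<cdot>\<^sub>m (B * Q)" n "A * Q"] ctrace_smult[of "B * Q" n] A B Q by simp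
    finally show ?thesis by simp
  qed
  show "\<exists>v\<in>carrier_vec n. ip v v = 1 \<and> Re (qf A v) = lam * Re (qf B v)"
  proof -
    have "lam \<in> rspec M" using lambda_facts(1)[OF M hM n] lam by simp
    then obtain u where u: "u \<in> carrier_vec n" "u \<noteq> 0\<^sub>v n" "M *\<^sub>v u = complex_of_real lam \<cdot>\<^sub>v u"
      unfolding rspec_def eigenvalue_def eigenvector_def using M by auto
    define v0 where "v0 = S *\<^sub>v u"
    have v0: "v0 \<in> carrier_vec n" "v0 \<noteq> 0\<^sub>v n" using S u Sinj by (auto simp: v0_def)
    have "qf A v0 = qf M u" using qfM[OF u(1)] by (simp add: v0_def)
    also have "\<dots> = complex_of_real lam * ip u u" unfolding qf_def u(3) by simp
    also have "ip u u = qf B v0" using qfB[OF u(1)] by (simp add: v0_def)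
    finally have eq: "qf A v0 = complex_of_real lam * qf B v0" .
    define c where "c = complex_of_real (1 / sqrt (Re (ip v0 v0)))"
    define v where "v = c \<cdot>\<^sub>v v0"
    have v: "v \<in> carrier_vec n" using v0 by (simp add: v_def)
    have pos: "0 < Re (ip v0 v0)" using ip_self_pos v0 by blast
    have "ip v v = cnj c * (c * ip v0 v0)" unfolding v_def by (subst ip_smult1) (use v0 in auto)
    also have "\<dots> = c * c * ip v0 v0" by (simp add: c_def)
    also have "\<dots> = 1" unfolding c_def by (rule norm_aux[OF pos ip_self_real])
    finally have v1: "ip v v = 1" .
    have "qf A v = cnj c * c * qf A v0" "qf B v = cnj c * c * qf B v0"
      unfolding v_def using qf_scale A B v0 by auto
    then have "qf A v = complex_of_real lam * qf B v" using eq by simp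
    then have "Re (qf A v) = lam * Re (qf B v)" by simp
    then show ?thesis using v v1 by blast
  qed
qed

lemma beta_eq: assumes "m \<in> S" "\<And>s. s \<in> S \<Longrightarrow> m \<le> s" shows "Inf S = (m::real)"
  using assms by (rule cInf_eq_minimum)

lemma main_lemma: assumes r: "\<rho> \<in> carrier_mat n n" and s: "\<sigma> \<in> carrier_mat n n"
  and pr: "pd \<rho>" and ps: "pd \<sigma>" and tr: "ctrace \<rho> = 1" and ts: "ctrace \<sigma> = 1"
  and x0: "0 \<le> x" and x1: "x \<le> lambda_min \<rho>"
  shows "beta (1 - x) \<rho> \<sigma> = x * exp (- D_pinf \<rho> \<sigma>)"
    "1 - beta x \<rho> \<sigma> = x * exp (- D_minf \<rho> \<sigma>)"
proof -
  have n: "0 < n" using tr r by (cases n) (auto simp: ctrace_def)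
  have dr: "dim_row \<rho> = n" using r by simp
  have hr: "adj \<rho> = \<rho>" using pd_adj r pr by auto
  have rank1: "\<exists>Q. Q \<in> carrier_mat n n \<and> psd Q \<and> psd (1\<^sub>m n - Q) \<and>
       Re (ctrace (\<rho> * Q)) = x \<and> Re (ctrace (B * Q)) = x * (Re (qf B v) / Re (qf \<rho> v))"
    if v: "v \<in> carrier_vec n" "ip v v = 1" and B: "B \<in> carrier_mat n n" for v B
  proof -
    define c where "c = Re (qf \<rho> v)"
    have v0: "v \<noteq> 0\<^sub>v n" using v by auto
    have cpos: "0 < c" using pd_qf_pos[OF r pr v(1) v0] by (simp add: c_def)
    have "lambda_min \<rho> * Re (ip v v) \<le> c" using lambda_facts(4)[OF r hr n v(1)] by (simp add: c_def)
    then have xc: "x \<le> c" using x1 v(2) by simp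
    define t where "t = x / c"
    have t: "0 \<le> t" "t \<le> 1" using x0 xc cpos by (auto simp: t_def)
    define Q where "Q = complex_of_real t \<cdot>\<^sub>m outer v"
    have Q: "Q \<in> carrier_mat n n" using v by (simp add: Q_def)
    show ?thesis
    proof (intro exI conjI)
      show "Q \<in> carrier_mat n n" by (rule Q)
      show "psd Q" "psd (1\<^sub>m n - Q)" using rank_one_psd[OF v t] by (auto simp: Q_def)
      show "Re (ctrace (\<rho> * Q)) = x" unfolding Q_def ctrace_rank_one[OF r v(1)]
        using cpos by (simp add: t_def c_def)
      show "Re (ctrace (B * Q)) = x * (Re (qf B v) / Re (qf \<rho> v))" unfolding Q_def ctrace_rank_one[OF B v(1)]
        by (simp add: t_def c_def)
    qed
  qed
  define lam where "lam = lambda_max (inv_sqrt \<sigma> * \<rho> * inv_sqrt \<sigma>)"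
  note G1 = GL[OF r s pr ps n, folded lam_def]
  have "exp (- D_pinf \<rho> \<sigma>) = 1 / lam" unfolding D_pinf_def lam_def[symmetric]
    using G1(1) by (simp add: exp_minus inverse_eq_divide)
  moreover have "beta (1 - x) \<rho> \<sigma> = x / lam"
    unfolding beta_def dr
  proof (rule beta_eq)
    obtain v where v: "v \<in> carrier_vec n" "ip v v = 1" "Re (qf \<rho> v) = lam * Re (qf \<sigma> v)" using G1(3) by blast
    have "v \<noteq> 0\<^sub>v n" using v(2) by auto
    then have qpos: "0 < Re (qf \<rho> v)" using pd_qf_pos[OF r pr v(1)] by blast
    obtain Q where Q: "Q \<in> carrier_mat n n" "psd Q" "psd (1\<^sub>m n - Q)" "Re (ctrace (\<rho> * Q)) = x"
      "Re (ctrace (\<sigma> * Q)) = x * (Re (qf \<sigma> v) / Re (qf \<rho> v))"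
      using rank1[OF v(1,2) s] by blast
    have sne: "Re (qf \<sigma> v) \<noteq> 0" using qpos v(3) by auto
    have "x * (Re (qf \<sigma> v) / Re (qf \<rho> v)) = x / lam" using v(3) G1(1) sne by (simp add: field_simps)
    then show "x / lam \<in> {Re (ctrace (\<sigma> * Q)) |Q. Q \<in> carrier_mat n n \<and> psd Q \<and> psd (1\<^sub>m n - Q) \<and>
        1 - (1 - x) \<le> Re (ctrace (\<rho> * Q))}" using Q by force
  next
    fix y assume "y \<in> {Re (ctrace (\<sigma> * Q)) |Q. Q \<in> carrier_mat n n \<and> psd Q \<and> psd (1\<^sub>m n - Q) \<and>
        1 - (1 - x) \<le> Re (ctrace (\<rho> * Q))}"
    then obtain Q where Q: "Q \<in> carrier_mat n n" "psd Q" "x \<le> Re (ctrace (\<rho> * Q))" "y = Re (ctrace (\<sigma> * Q))" by auto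
    have "x \<le> lam * y" using G1(2)[OF Q(1,2)] Q(3,4) by simp
    then show "x / lam \<le> y" using G1(1) by (simp add: field_simps)
  qed
  ultimately show "beta (1 - x) \<rho> \<sigma> = x * exp (- D_pinf \<rho> \<sigma>)" by simp
  define mu where "mu = lambda_max (inv_sqrt \<rho> * \<sigma> * inv_sqrt \<rho>)"
  note G2 = GL[OF s r ps pr n, folded mu_def]
  have "exp (- D_minf \<rho> \<sigma>) = mu" unfolding D_minf_def mu_def[symmetric]
    using G2(1) by simp
  moreover have "beta x \<rho> \<sigma> = 1 - x * mu"
    unfolding beta_def dr
  proof (rule beta_eq)
    obtain v where v: "v \<in> carrier_vec n" "ip v v = 1" "Re (qf \<sigma> v) = mu * Re (qf \<rho> v)" using G2(3) by blast
    have "v \<noteq> 0\<^sub>v n" using v(2) by auto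
    then have qpos: "0 < Re (qf \<rho> v)" using pd_qf_pos[OF r pr v(1)] by blast
    obtain Q' where Q': "Q' \<in> carrier_mat n n" "psd Q'" "psd (1\<^sub>m n - Q')" "Re (ctrace (\<rho> * Q')) = x"
      "Re (ctrace (\<sigma> * Q')) = x * (Re (qf \<sigma> v) / Re (qf \<rho> v))"
      using rank1[OF v(1,2) s] by blast
    have s': "Re (ctrace (\<sigma> * Q')) = x * mu" using Q'(5) v(3) qpos by simp
    define Q where "Q = 1\<^sub>m n - Q'"
    have Q: "Q \<in> carrier_mat n n" unfolding Q_def by (rule minus_carrier_mat[OF Q'(1)])
    have QQ: "1\<^sub>m n - Q = Q'" unfolding Q_def by (rule eq_matI) (use Q'(1) in auto)
    have trX: "ctrace (X * Q) = ctrace X - ctrace (X * Q')" if X: "X \<in> carrier_mat n n" for X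
    proof -
      have "X * Q = X - X * Q'" unfolding Q_def
        using mult_minus_distrib_mat[OF X one_carrier_mat Q'(1)] X by simp
      then show ?thesis using ctrace_minus[of X n "X * Q'"] X Q'(1) by simp
    qed
    have "Re (ctrace (\<sigma> * Q)) = 1 - x * mu" using trX[OF s] ts s' by simp
    moreover have "Re (ctrace (\<rho> * Q)) = 1 - x" using trX[OF r] tr Q'(4) by simp
    moreover have "psd Q" using Q'(3) by (simp add: Q_def)
    moreover have "psd (1\<^sub>m n - Q)" using Q'(2) QQ by simp
    ultimately show "1 - x * mu \<in> {Re (ctrace (\<sigma> * Q)) |Q. Q \<in> carrier_mat n n \<and> psd Q \<and> psd (1\<^sub>m n - Q) \<and>
        1 - x \<le> Re (ctrace (\<rho> * Q))}" using Q by (intro CollectI exI[of _ Q]) simp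
  next
    fix y assume "y \<in> {Re (ctrace (\<sigma> * Q)) |Q. Q \<in> carrier_mat n n \<and> psd Q \<and> psd (1\<^sub>m n - Q) \<and>
        1 - x \<le> Re (ctrace (\<rho> * Q))}"
    then obtain Q where Q: "Q \<in> carrier_mat n n" "psd (1\<^sub>m n - Q)" "1 - x \<le> Re (ctrace (\<rho> * Q))"
      "y = Re (ctrace (\<sigma> * Q))" by auto
    define Q' where "Q' = 1\<^sub>m n - Q"
    have Q': "Q' \<in> carrier_mat n n" unfolding Q'_def by (rule minus_carrier_mat[OF Q(1)])
    have trX: "ctrace (X * Q') = ctrace X - ctrace (X * Q)" if X: "X \<in> carrier_mat n n" for X
    proof -
      have "X * Q' = X - X * Q" unfolding Q'_def
        using mult_minus_distrib_mat[OF X one_carrier_mat Q(1)] X by simp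
      then show ?thesis using ctrace_minus[of X n "X * Q"] X Q(1) by simp
    qed
    have "Re (ctrace (\<sigma> * Q')) \<le> mu * Re (ctrace (\<rho> * Q'))" using G2(2)[OF Q'] Q(2) by (simp add: Q'_def)
    then have "1 - y \<le> mu * (1 - Re (ctrace (\<rho> * Q)))" using trX[OF s] trX[OF r] tr ts Q(4) by simp
    also have "\<dots> \<le> mu * x" using Q(3) G2(1) by (intro mult_left_mono) auto
    finally show "1 - x * mu \<le> y" by (simp add: mult.commute)
  qed
  ultimately show "1 - beta x \<rho> \<sigma> = x * exp (- D_minf \<rho> \<sigma>)" by simp
qed

definition msum :: "nat \<Rightarrow> real set \<Rightarrow> (real \<Rightarrow> complex mat) \<Rightarrow> complex mat" where
  "msum n L F = mat n n (\<lambda>(i,j). \<Sum>l\<in>L. F l $$ (i,j))"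

lemma msum_carrier[simp]: "msum n L F \<in> carrier_mat n n"
  by (simp add: msum_def)

lemma qf_sum_form: assumes "A \<in> carrier_mat n n" "x \<in> carrier_vec n"
  shows "qf A x = (\<Sum>i<n. \<Sum>j<n. cnj (x $ i) * A $$ (i,j) * x $ j)"
  using assms by (auto simp: qf_def ip_def scalar_prod_def sum_distrib_left lessThan_atLeast0 ac_simps intro!: sum.cong)

lemma qf_msum: assumes L: "finite L" and F: "\<And>l. l \<in> L \<Longrightarrow> F l \<in> carrier_mat n n" and x: "x \<in> carrier_vec n"
  shows "qf (msum n L F) x = (\<Sum>l\<in>L. qf (F l) x)"
proof -
  have "qf (msum n L F) x = (\<Sum>i<n. \<Sum>j<n. cnj (x $ i) * (\<Sum>l\<in>L. F l $$ (i,j)) * x $ j)"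
    using qf_sum_form[OF msum_carrier x] by (simp add: msum_def)
  also have "\<dots> = (\<Sum>i<n. \<Sum>j<n. \<Sum>l\<in>L. cnj (x $ i) * F l $$ (i,j) * x $ j)"
    by (simp add: sum_distrib_left sum_distrib_right)
  also have "\<dots> = (\<Sum>i<n. \<Sum>l\<in>L. \<Sum>j<n. cnj (x $ i) * F l $$ (i,j) * x $ j)"
    by (rule sum.cong[OF refl], rule sum.swap)
  also have "\<dots> = (\<Sum>l\<in>L. \<Sum>i<n. \<Sum>j<n. cnj (x $ i) * F l $$ (i,j) * x $ j)"
    by (rule sum.swap)
  also have "\<dots> = (\<Sum>l\<in>L. qf (F l) x)"
    by (rule sum.cong[OF refl]) (use qf_sum_form[OF F x] in simp)
  finally show ?thesis .
qed

lemma ctrace_msum: assumes "\<And>l. l \<in> L \<Longrightarrow> F l \<in> carrier_mat n n"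
  shows "ctrace (msum n L F) = (\<Sum>l\<in>L. ctrace (F l))"
proof -
  have "ctrace (msum n L F) = (\<Sum>i<n. \<Sum>l\<in>L. F l $$ (i,i))" unfolding ctrace_def msum_def by simp
  also have "\<dots> = (\<Sum>l\<in>L. \<Sum>i<n. F l $$ (i,i))" by (rule sum.swap)
  also have "\<dots> = (\<Sum>l\<in>L. ctrace (F l))" unfolding ctrace_def using assms by (intro sum.cong) auto
  finally show ?thesis .
qed

lemma adj_msum: assumes "\<And>l. l \<in> L \<Longrightarrow> F l \<in> carrier_mat n n" "\<And>l. l \<in> L \<Longrightarrow> adj (F l) = F l"
  shows "adj (msum n L F) = msum n L F"
proof (rule eq_matI)
  fix i j assume "i < dim_row (msum n L F)" "j < dim_col (msum n L F)"
  then have i: "i < n" and j: "j < n" by (auto simp: msum_def)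
  have "adj (msum n L F) $$ (i,j) = (\<Sum>l\<in>L. cnj (F l $$ (j,i)))" using i j by (simp add: msum_def cnj_sum)
  also have "\<dots> = (\<Sum>l\<in>L. F l $$ (i,j))"
  proof (rule sum.cong[OF refl])
    fix l assume l: "l \<in> L"
    have "adj (F l) $$ (i,j) = cnj (F l $$ (j,i))" using assms(1)[OF l] i j by simp
    then show "cnj (F l $$ (j,i)) = F l $$ (i,j)" using assms(2)[OF l] by simp
  qed
  finally show "adj (msum n L F) $$ (i,j) = msum n L F $$ (i,j)" using i j by (simp add: msum_def)
qed (auto simp: msum_def)

lemma ctrace_udu: assumes X: "X \<in> carrier_mat n n" and U: "unitary n U"
  shows "ctrace (X * (U * dmat n g * adj U)) = (\<Sum>i<n. (adj U * (X * U)) $$ (i,i) * complex_of_real (g i))"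
proof -
  have Uc: "U \<in> carrier_mat n n" using U unitaryD by auto
  have "X * (U * dmat n g * adj U) = (X * (U * dmat n g)) * adj U"
    using X Uc by (simp add: assoc_mult_mat[of _ n n _ n _ n])
  then have "ctrace (X * (U * dmat n g * adj U)) = ctrace (adj U * (X * (U * dmat n g)))"
    using ctrace_comm[of "X * (U * dmat n g)" n n "adj U"] X Uc by simp
  also have "adj U * (X * (U * dmat n g)) = (adj U * (X * U)) * dmat n g"
    using X Uc by (simp add: assoc_mult_mat[of _ n n _ n _ n])
  also have "ctrace \<dots> = (\<Sum>i<n. (adj U * (X * U)) $$ (i,i) * complex_of_real (g i))"
    by (rule ctrace_dmat_right) (use X Uc in \<open>metis adj_carrier_mat mult_carrier_mat\<close>)
  finally show ?thesis .
qed

lemma udu_vec_eq: assumes U: "unitary n U" and v: "v \<in> carrier_vec n"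
  shows "(U * dmat n g * adj U) *\<^sub>v v = complex_of_real a \<cdot>\<^sub>v v \<longleftrightarrow>
    (\<forall>i<n. complex_of_real (g i) * (adj U *\<^sub>v v) $ i = complex_of_real a * (adj U *\<^sub>v v) $ i)"
proof -
  have Uc: "U \<in> carrier_mat n n" using U unitaryD by auto
  define c where "c = adj U *\<^sub>v v"
  have c: "c \<in> carrier_vec n" using Uc v by (simp add: c_def)
  have l: "(U * dmat n g * adj U) *\<^sub>v v = U *\<^sub>v (dmat n g *\<^sub>v c)" using udu_mult_vec[OF U v] by (simp add: c_def)
  have r: "complex_of_real a \<cdot>\<^sub>v v = U *\<^sub>v (complex_of_real a \<cdot>\<^sub>v c)"
    using mult_mat_vec[OF Uc c] unitary_adj_mult_vec(1)[OF U v] by (simp add: c_def)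
  have "U *\<^sub>v (dmat n g *\<^sub>v c) = U *\<^sub>v (complex_of_real a \<cdot>\<^sub>v c) \<longleftrightarrow> dmat n g *\<^sub>v c = complex_of_real a \<cdot>\<^sub>v c"
    using unitary_adj_mult_vec(2)[OF U] c by (metis dmat_mult_vec_carrier smult_carrier_vec)
  also have "\<dots> \<longleftrightarrow> (\<forall>i<n. complex_of_real (g i) * c $ i = complex_of_real a * c $ i)"
  proof
    assume "dmat n g *\<^sub>v c = complex_of_real a \<cdot>\<^sub>v c"
    then have eq: "vec n (\<lambda>i. complex_of_real (g i) * c $ i) = complex_of_real a \<cdot>\<^sub>v c" using c by (simp add: dmat_mult_vec)
    show "\<forall>i<n. complex_of_real (g i) * c $ i = complex_of_real a * c $ i"
    proof (intro allI impI)
      fix i assume i: "i < n"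
      show "complex_of_real (g i) * c $ i = complex_of_real a * c $ i"
        using arg_cong[OF eq, of "\<lambda>w. w $ i"] i c by simp
    qed
  next
    assume "\<forall>i<n. complex_of_real (g i) * c $ i = complex_of_real a * c $ i"
    then show "dmat n g *\<^sub>v c = complex_of_real a \<cdot>\<^sub>v c" using c by (auto simp: dmat_mult_vec intro!: eq_vecI)
  qed
  finally show ?thesis unfolding l r c_def .
qed

lemma proj_unique: assumes P: "P \<in> carrier_mat n n" and P': "P' \<in> carrier_mat n n"
  and hP: "adj P = P" and hP': "adj P' = P'" and iP: "P * P = P" and iP': "P' * P' = P'"
  and fix_eq: "\<And>v. v \<in> carrier_vec n \<Longrightarrow> P *\<^sub>v v = v \<longleftrightarrow> P' *\<^sub>v v = v"
  shows "P = P'"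
proof -
  have absorb: "B * A = A" if A: "(A::complex mat) \<in> carrier_mat n n" "A * A = A" and B: "B \<in> carrier_mat n n"
    and f: "\<And>v. v \<in> carrier_vec n \<Longrightarrow> A *\<^sub>v v = v \<Longrightarrow> B *\<^sub>v v = v" for A B
  proof (rule mat_eq_by_vec[of "B * A" n n A])
    show "B * A \<in> carrier_mat n n" "A \<in> carrier_mat n n" using A B by auto
    fix x :: "complex vec" assume x: "x \<in> carrier_vec n"
    have Ax: "A *\<^sub>v x \<in> carrier_vec n" using A x by simp
    have "A *\<^sub>v (A *\<^sub>v x) = A *\<^sub>v x" using mult_mat_vec_assoc[OF A(1) A(1) x] A(2) by simp
    then have "B *\<^sub>v (A *\<^sub>v x) = A *\<^sub>v x" using f[OF Ax] by simp
    then show "(B * A) *\<^sub>v x = A *\<^sub>v x" using mult_mat_vec_assoc[OF B A(1) x] by simp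
  qed
  have 1: "P' * P = P" by (rule absorb[OF P iP P']) (use fix_eq in blast)
  have 2: "P * P' = P'" by (rule absorb[OF P' iP' P]) (use fix_eq in blast)
  have "P = adj (P' * P)" using 1 hP by simp
  also have "\<dots> = adj P * adj P'" by (rule adj_mult[OF P' P])
  also have "\<dots> = P'" using hP hP' 2 by simp
  finally show ?thesis .
qed

lemma eig_proj_udu: assumes U: "unitary n U" and tau: "\<tau> = U * dmat n f * adj U"
  shows "eig_proj \<tau> l = U * dmat n (\<lambda>i. if f i = l then 1 else 0) * adj U"
proof -
  define e where "e = (\<lambda>i. if f i = l then 1 else (0::real))"
  define P where "P = U * dmat n e * adj U"
  have "\<tau> \<in> carrier_mat n n" using tau udu_carrier[OF U] by simp
  then have dr: "dim_row \<tau> = n" by simp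
  have Pc: "P \<in> carrier_mat n n" using udu_carrier[OF U] by (simp add: P_def)
  have hP: "adj P = P" using adj_udu[OF U] by (simp add: P_def)
  have iP: "P * P = P" unfolding P_def udu_mult[OF U]
    by (rule arg_cong[where f = "\<lambda>D. U * D * adj U"], rule dmat_cong) (simp add: e_def)
  have fixP: "P *\<^sub>v v = v \<longleftrightarrow> \<tau> *\<^sub>v v = complex_of_real l \<cdot>\<^sub>v v" if v: "v \<in> carrier_vec n" for v
  proof -
    have "P *\<^sub>v v = v \<longleftrightarrow> P *\<^sub>v v = complex_of_real 1 \<cdot>\<^sub>v v" by simp
    also have "\<dots> \<longleftrightarrow> (\<forall>i<n. complex_of_real (e i) * (adj U *\<^sub>v v) $ i = complex_of_real 1 * (adj U *\<^sub>v v) $ i)"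
      unfolding P_def by (rule udu_vec_eq[OF U v])
    also have "\<dots> \<longleftrightarrow> (\<forall>i<n. complex_of_real (f i) * (adj U *\<^sub>v v) $ i = complex_of_real l * (adj U *\<^sub>v v) $ i)"
      by (auto simp: e_def)
    also have "\<dots> \<longleftrightarrow> \<tau> *\<^sub>v v = complex_of_real l \<cdot>\<^sub>v v" unfolding tau by (rule udu_vec_eq[OF U v, symmetric])
    finally show ?thesis .
  qed
  have "eig_proj \<tau> l = P" unfolding eig_proj_def dr
  proof (rule the_equality)
    show "P \<in> carrier_mat n n \<and> hermitian P \<and> P * P = P \<and>
      (\<forall>v\<in>carrier_vec n. (P *\<^sub>v v = v) = (\<tau> *\<^sub>v v = complex_of_real l \<cdot>\<^sub>v v))"
      using Pc hP iP fixP by (auto simp: hermitian_def)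
    fix P' assume a: "P' \<in> carrier_mat n n \<and> hermitian P' \<and> P' * P' = P' \<and>
      (\<forall>v\<in>carrier_vec n. (P' *\<^sub>v v = v) = (\<tau> *\<^sub>v v = complex_of_real l \<cdot>\<^sub>v v))"
    show "P' = P"
      by (rule proj_unique[of P' n P]) (use a Pc hP iP fixP in \<open>auto simp: hermitian_def\<close>)
  qed
  then show ?thesis by (simp add: P_def e_def)
qed

lemma pd_qf_nonneg: "A \<in> carrier_mat n n \<Longrightarrow> pd A \<Longrightarrow> x \<in> carrier_vec n \<Longrightarrow> 0 \<le> Re (qf A x)"
  using pd_qf_pos[of A n x] by (cases "x = 0\<^sub>v n") (auto intro: less_imp_le)

lemma pinch_props: assumes T: "\<tau> \<in> carrier_mat n n" and hT: "adj \<tau> = \<tau>"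
  and X: "X \<in> carrier_mat n n" and pX: "pd X"
  shows "pinch \<tau> X \<in> carrier_mat n n" "pd (pinch \<tau> X)" "ctrace (pinch \<tau> X) = ctrace X"
proof -
  obtain U f where U: "unitary n U" "\<tau> = U * dmat n f * adj U" using spectral_mat[OF T hT] by blast
  have Uc: "U \<in> carrier_mat n n" using U unitaryD by auto
  define L where "L = rspec \<tau>"
  have L: "L = f ` {..<n}" using rspec_udu[OF U(1)] U(2) by (simp add: L_def)
  have finL: "finite L" using L by simp
  define e where "e = (\<lambda>l i. if f i = l then 1 else (0::real))"
  define P where "P l = U * dmat n (e l) * adj U" for l
  have P: "eig_proj \<tau> l = P l" for l using eig_proj_udu[OF U] by (simp add: P_def e_def)
  have Pc: "P l \<in> carrier_mat n n" for l using udu_carrier[OF U(1)] by (simp add: P_def)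
  have hP: "adj (P l) = P l" for l using adj_udu[OF U(1)] by (simp add: P_def)
  have iP: "P l * P l = P l" for l unfolding P_def udu_mult[OF U(1)]
    by (rule arg_cong[where f = "\<lambda>D. U * D * adj U"], rule dmat_cong) (simp add: e_def)
  define F where "F l = P l * X * P l" for l
  have Fc: "F l \<in> carrier_mat n n" for l unfolding F_def by (rule mult_carrier_mat[OF mult_carrier_mat[OF Pc X] Pc])
  have PXc: "P l * X \<in> carrier_mat n n" for l by (rule mult_carrier_mat[OF Pc X])
  have XPc: "X * P l \<in> carrier_mat n n" for l by (rule mult_carrier_mat[OF X Pc])
  have pin: "pinch \<tau> X = msum n L F"
    unfolding pinch_def msum_def F_def P L_def using T by simp
  show "pinch \<tau> X \<in> carrier_mat n n" unfolding pin by simp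
  have trF: "ctrace (F l) = ctrace (X * P l)" for l
  proof -
    have "ctrace (F l) = ctrace ((P l * X) * P l)" by (simp add: F_def)
    also have "\<dots> = ctrace (P l * (P l * X))" by (rule ctrace_comm[of _ n n]) (use Pc X PXc XPc in auto)
    also have "P l * (P l * X) = P l * X" using iP Pc X PXc by (simp add: assoc_mult_mat[of _ n n _ n _ n, symmetric])
    also have "ctrace (P l * X) = ctrace (X * P l)" by (rule ctrace_comm[of _ n n]) (use Pc X PXc XPc in auto)
    finally show ?thesis .
  qed
  define Y where "Y = adj U * (X * U)"
  have trXP: "ctrace (X * P l) = (\<Sum>i<n. Y $$ (i,i) * complex_of_real (e l i))" for l
    unfolding P_def Y_def by (rule ctrace_udu[OF X U(1)])
  have "ctrace X = ctrace (X * (U * dmat n (\<lambda>_. 1) * adj U))" using udu_one[OF U(1), of "\<lambda>_. 1"] X by simp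
  also have "\<dots> = (\<Sum>i<n. Y $$ (i,i) * complex_of_real 1)" unfolding Y_def by (rule ctrace_udu[OF X U(1)])
  finally have trX: "ctrace X = (\<Sum>i<n. Y $$ (i,i))" by simp
  have esum: "(\<Sum>l\<in>L. complex_of_real (e l i)) = 1" if i: "i < n" for i
  proof -
    have "(\<Sum>l\<in>L. complex_of_real (e l i)) = (\<Sum>l\<in>L. if f i = l then 1 else 0)"
      by (rule sum.cong) (auto simp: e_def)
    also have "\<dots> = 1" using finL i L by simp
    finally show ?thesis .
  qed
  have "ctrace (pinch \<tau> X) = (\<Sum>l\<in>L. ctrace (F l))" unfolding pin by (rule ctrace_msum) (use Fc in auto)
  also have "\<dots> = (\<Sum>l\<in>L. \<Sum>i<n. Y $$ (i,i) * complex_of_real (e l i))" using trF trXP by simp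
  also have "\<dots> = (\<Sum>i<n. \<Sum>l\<in>L. Y $$ (i,i) * complex_of_real (e l i))" by (rule sum.swap)
  also have "\<dots> = (\<Sum>i<n. Y $$ (i,i) * (\<Sum>l\<in>L. complex_of_real (e l i)))" by (simp add: sum_distrib_left)
  also have "\<dots> = (\<Sum>i<n. Y $$ (i,i))" by (rule sum.cong) (auto simp: esum)
  finally show "ctrace (pinch \<tau> X) = ctrace X" using trX by simp
  have hX: "adj X = X" using pd_adj X pX by auto
  have hF: "adj (F l) = F l" for l
  proof -
    have "adj (F l) = adj (P l) * adj (P l * X)" unfolding F_def by (rule adj_mult[of _ n n _ n]) (use Pc X PXc XPc in auto)
    also have "adj (P l * X) = adj X * adj (P l)" by (rule adj_mult[of _ n n _ n]) (use Pc X PXc XPc in auto)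
    finally show ?thesis using hP hX Pc X PXc XPc by (simp add: F_def assoc_mult_mat[of _ n n _ n _ n])
  qed
  have hpin: "adj (pinch \<tau> X) = pinch \<tau> X" unfolding pin by (rule adj_msum) (use Fc hF in auto)
  have qfF: "qf (F l) x = qf X (P l *\<^sub>v x)" if x: "x \<in> carrier_vec n" for x l
  proof -
    have "F l *\<^sub>v x = P l *\<^sub>v (X *\<^sub>v (P l *\<^sub>v x))"
    proof -
      have Px: "P l *\<^sub>v x \<in> carrier_vec n" using mult_mat_vec_carrier[OF Pc x] .
      show ?thesis using mult_mat_vec_assoc[OF PXc[of l] Pc[of l] x] mult_mat_vec_assoc[OF Pc[of l] X Px] by (simp add: F_def)
    qed
    then have "qf (F l) x = ip x (P l *\<^sub>v (X *\<^sub>v (P l *\<^sub>v x)))" by (simp add: qf_def)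
    also have "\<dots> = ip (P l *\<^sub>v x) (X *\<^sub>v (P l *\<^sub>v x))" by (rule hermitian_ip[OF Pc hP x]) (use X mult_mat_vec_carrier[OF Pc x] in auto)
    finally show ?thesis by (simp add: qf_def)
  qed
  have pos: "0 < Re (qf (pinch \<tau> X) x)" if x: "x \<in> carrier_vec n" "x \<noteq> 0\<^sub>v n" for x
  proof -
    define c where "c = adj U *\<^sub>v x"
    have c: "c \<in> carrier_vec n" using Uc x by (simp add: c_def)
    have "c \<noteq> 0\<^sub>v n"
    proof
      assume "c = 0\<^sub>v n"
      then have "U *\<^sub>v c = 0\<^sub>v n" using Uc by simp
      then show False using unitary_adj_mult_vec(1)[OF U(1) x(1)] x(2) by (simp add: c_def)
    qed
    then obtain k where k: "k < n" "c $ k \<noteq> 0" using c by (metis eq_vecI carrier_vecD index_zero_vec)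
    define l0 where "l0 = f k"
    have l0: "l0 \<in> L" using k L by (simp add: l0_def)
    have Pl0: "P l0 *\<^sub>v x \<noteq> 0\<^sub>v n"
    proof
      assume z: "P l0 *\<^sub>v x = 0\<^sub>v n"
      have "P l0 *\<^sub>v x = U *\<^sub>v (dmat n (e l0) *\<^sub>v c)" unfolding P_def using udu_mult_vec[OF U(1) x(1)] by (simp add: c_def)
      then have "adj U *\<^sub>v (P l0 *\<^sub>v x) = dmat n (e l0) *\<^sub>v c" using unitary_adj_mult_vec(2)[OF U(1)] c by simp
      then have "dmat n (e l0) *\<^sub>v c = 0\<^sub>v n" using z mult_mat_vec_zero[OF adj_carrier_mat[OF Uc]] by simp
      then have "(dmat n (e l0) *\<^sub>v c) $ k = 0" using k by simp
      then show False using k c by (simp add: dmat_mult_vec e_def l0_def)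
    qed
    have Pl0c: "P l0 *\<^sub>v x \<in> carrier_vec n" using mult_mat_vec_carrier[OF Pc x(1)] .
    have "0 < Re (qf X (P l0 *\<^sub>v x))" by (rule pd_qf_pos[OF X pX Pl0c Pl0])
    also have "\<dots> \<le> (\<Sum>l\<in>L. Re (qf X (P l *\<^sub>v x)))"
      by (rule member_le_sum[OF l0 _ finL]) (use pd_qf_nonneg[OF X pX mult_mat_vec_carrier[OF Pc x(1)]] in auto)
    also have "\<dots> = Re (qf (pinch \<tau> X) x)" unfolding pin qf_msum[OF finL Fc x(1)] using qfF[OF x(1)] by simp
    finally show ?thesis .
  qed
  show "pd (pinch \<tau> X)" unfolding pd_iff[OF msum_carrier[of n L F, folded pin]] using hpin pos by auto
qed

theorem lemma7:
  fixes n :: nat and \<rho> \<sigma> :: "complex mat"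
  assumes "density_op n \<rho>" and "density_op n \<sigma>"
    and "full_rank \<rho>" and "full_rank \<sigma>"
  shows "(\<forall>x::real. 0 \<le> x \<and> x \<le> lambda_min \<rho> \<longrightarrow>
            beta (1 - x) \<rho> \<sigma> = x * exp (- D_pinf \<rho> \<sigma>) \<and>
            1 - beta x \<rho> \<sigma> = x * exp (- D_minf \<rho> \<sigma>) \<and>
            beta_R (1 - x) \<rho> \<sigma> = x * exp (- D_pinf \<rho> (pinch \<rho> \<sigma>)) \<and>
            1 - beta_R x \<rho> \<sigma> = x * exp (- D_minf \<rho> (pinch \<rho> \<sigma>))) \<and>
         (\<forall>x::real. 0 \<le> x \<and> x \<le> lambda_min (pinch \<sigma> \<rho>) \<longrightarrow>
            beta_L (1 - x) \<rho> \<sigma> = x * exp (- D_pinf (pinch \<sigma> \<rho>) \<sigma>) \<and>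
            1 - beta_L x \<rho> \<sigma> = x * exp (- D_minf (pinch \<sigma> \<rho>) \<sigma>))"
proof -
  have r: "\<rho> \<in> carrier_mat n n" and psr: "psd \<rho>" and tr: "ctrace \<rho> = 1"
    using assms(1) by (auto simp: density_op_def)
  have s: "\<sigma> \<in> carrier_mat n n" and pss: "psd \<sigma>" and ts: "ctrace \<sigma> = 1"
    using assms(2) by (auto simp: density_op_def)
  have pr: "pd \<rho>" using psr assms(3) by (simp add: pd_def full_rank_def)
  have ps: "pd \<sigma>" using pss assms(4) by (simp add: pd_def full_rank_def)
  have hr: "adj \<rho> = \<rho>" using pd_adj r pr by auto
  have hs: "adj \<sigma> = \<sigma>" using pd_adj s ps by auto
  note PR = pinch_props[OF r hr s ps]
  note PS = pinch_props[OF s hs r pr]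
  have tPR: "ctrace (pinch \<rho> \<sigma>) = 1" using PR(3) ts by simp
  have tPS: "ctrace (pinch \<sigma> \<rho>) = 1" using PS(3) tr by simp
  show ?thesis
  proof (intro conjI allI impI)
    fix x :: real assume x: "0 \<le> x \<and> x \<le> lambda_min \<rho>"
    note M1 = main_lemma[OF r s pr ps tr ts, of x]
    note M2 = main_lemma[OF r PR(1) pr PR(2) tr tPR, of x]
    show "beta (1 - x) \<rho> \<sigma> = x * exp (- D_pinf \<rho> \<sigma>)" using M1 x by blast
    show "1 - beta x \<rho> \<sigma> = x * exp (- D_minf \<rho> \<sigma>)" using M1 x by blast
    show "beta_R (1 - x) \<rho> \<sigma> = x * exp (- D_pinf \<rho> (pinch \<rho> \<sigma>))" unfolding beta_R_def using M2 x by blast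
    show "1 - beta_R x \<rho> \<sigma> = x * exp (- D_minf \<rho> (pinch \<rho> \<sigma>))" unfolding beta_R_def using M2 x by blast
  next
    fix x :: real assume x: "0 \<le> x \<and> x \<le> lambda_min (pinch \<sigma> \<rho>)"
    note M3 = main_lemma[OF PS(1) s PS(2) ps tPS ts, of x]
    show "beta_L (1 - x) \<rho> \<sigma> = x * exp (- D_pinf (pinch \<sigma> \<rho>) \<sigma>)" unfolding beta_L_def using M3 x by blast
    show "1 - beta_L x \<rho> \<sigma> = x * exp (- D_minf (pinch \<sigma> \<rho>) \<sigma>)" unfolding beta_L_def using M3 x by blast
  qed
qed


end
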